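(* Let $\mathcal{G}=(V,\mathit{Act},\mathcal{R})$ be a normed BPA system (with $V$ linearly ordered) and $\mathcal{T}^\mathcal{G}=(Q,V,\Delta,q_0)$ its canonical transducer. Then for every state $R\in Q$ and all $\alpha,\beta\in V^*$: $\alpha\sim_R\mathcal{T}^\mathcal{G}_R(\alpha)$, and $\alpha\sim_R\beta$ if and only if $\mathcal{T}^\mathcal{G}_R(\alpha)=\mathcal{T}^\mathcal{G}_R(\beta)$.
   Context: BPA system $\mathcal{G}=(V,\mathit{Act},\mathcal{R})$: finite variables $V$, finite actions (possibly with silent $\tau$), rules $A\xrightarrow{a}\alpha$; LTS $\mathcal{L}_\mathcal{G}$ on $V^*$ with $A\beta\xrightarrow{a}\alpha\beta$. Normed: each variable can reach $\varepsilon$. Branching bisimilarity on an LTS: largest relation $\mathcal{B}$ such that for $(s,t)\in\mathcal{B}$ each move $s\xrightarrow{a}s'$ is matched by $a=\tau,(s',t)\in\mathcal{B}$, or by $t=t_0\xrightarrow{\tau}\cdots\xrightarrow{\tau}t_k\xrightarrow{a}t'$ with $(s',t')\in\mathcal{B}$, $(s,t_i)\in\mathcal{B}$ for $i\in[1,k]$; and symmetrically. $\sim$ is branching bisimilarity in $\mathcal{L}_\mathcal{G}$. For $R\subseteq V$, $\mathcal{L}_{\mathcal{G},R}$ arises from $\mathcal{L}_\mathcal{G}$ by removing all outgoing transitions of states in $R^*$, and $\sim_R$ is branching bisimilarity in $\mathcal{L}_{\mathcal{G},R}$. Transducers read right to left: $q'\xleftarrow{A/\gamma}q$ means $\Delta(q,A)=(q',\gamma)$,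 extended to strings by $q\xleftarrow{\varepsilon/\varepsilon}q$ and composition; $\mathcal{T}_q(\alpha)$ is the output from state $q$ on input $\alpha$. Canonical transducer: $R_\gamma=\{X\in V\mid X\gamma\sim\gamma\}$; prefix $\alpha$ of $\alpha\gamma$ is redundancy-free if not of the form $\delta X\beta$ with $X\beta\gamma\sim\beta\gamma$; $\alpha$ lexicographically smaller than $\beta$ if $\alpha$ is a proper suffix of $\beta$ or $\alpha=\alpha'A\gamma,\beta=\beta'B\gamma$ with $A<B$. $\mathcal{T}^\mathcal{G}=(Q,V,\Delta,q_0)$: $Q=\{R_\gamma\mid\gamma\in V^*\}$, $q_0=R_\varepsilon$, $\Delta(R_\gamma,A)=(R_{A\gamma},\alpha)$ where $\alpha$ is lexicographically smallest among the longest strings with $\alpha\gamma\sim A\gamma$ and $\alpha$ a redundancy-free prefix of $\alpha\gamma$ (well defined, depends only on $R_\gamma$). *)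

theory Defs
  imports Main
begin

datatype 'a act = Tau | Vis 'a

text \<open>A tau-path t = t0 -tau-> t1 -tau-> ... -tau-> tk, where the list is [t1,...,tk].\<close>
fun tau_path :: "('s \<Rightarrow> 'a act \<Rightarrow> 's \<Rightarrow> bool) \<Rightarrow> 's \<Rightarrow> 's list \<Rightarrow> bool" where
  "tau_path tr t [] = True"
| "tau_path tr t (u # us) = (tr t Tau u \<and> tau_path tr u us)"

definition branching_sim :: "('s \<Rightarrow> 'a act \<Rightarrow> 's \<Rightarrow> bool) \<Rightarrow> ('s \<times> 's) set \<Rightarrow> bool" where
  "branching_sim tr B \<longleftrightarrow>
     (\<forall>s t a s'. (s, t) \<in> B \<longrightarrow> tr s a s' \<longrightarrow>
        ((a = Tau \<and> (s', t) \<in> B) \<or>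
         (\<exists>ts t'. tau_path tr t ts \<and> tr (last (t # ts)) a t' \<and> (s', t') \<in> B
                 \<and> (\<forall>u \<in> set ts. (s, u) \<in> B))))"

definition branching_bisimulation :: "('s \<Rightarrow> 'a act \<Rightarrow> 's \<Rightarrow> bool) \<Rightarrow> ('s \<times> 's) set \<Rightarrow> bool" where
  "branching_bisimulation tr B \<longleftrightarrow> branching_sim tr B \<and> branching_sim tr (B\<inverse>)"

definition branching_bisimilar :: "('s \<Rightarrow> 'a act \<Rightarrow> 's \<Rightarrow> bool) \<Rightarrow> 's \<Rightarrow> 's \<Rightarrow> bool" where
  "branching_bisimilar tr s t \<longleftrightarrow> (\<exists>B. branching_bisimulation tr B \<and> (s, t) \<in> B)"

text \<open>Variables are the (finite, linearly ordered) type 'v; actions are 'a act (Tau is silent);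
  the rules are a set of triples (A, a, alpha) meaning A -a-> alpha.\<close>

definition bpa_step :: "('v \<times> 'a act \<times> 'v list) set \<Rightarrow> 'v list \<Rightarrow> 'a act \<Rightarrow> 'v list \<Rightarrow> bool" where
  "bpa_step Rules s a s' \<longleftrightarrow>
     (\<exists>A \<alpha> \<beta>. s = A # \<beta> \<and> (A, a, \<alpha>) \<in> Rules \<and> s' = \<alpha> @ \<beta>)"

definition normed :: "('v \<times> 'a act \<times> 'v list) set \<Rightarrow> bool" where
  "normed Rules \<longleftrightarrow> (\<forall>X. (\<lambda>s s'. \<exists>a. bpa_step Rules s a s')\<^sup>*\<^sup>* [X] [])"

definition bpa_step_R :: "('v \<times> 'a act \<times> 'v list) set \<Rightarrow> 'v set \<Rightarrow> 'v list \<Rightarrow> 'a act \<Rightarrow> 'v list \<Rightarrow> bool" where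
  "bpa_step_R Rules R s a s' \<longleftrightarrow> bpa_step Rules s a s' \<and> \<not> set s \<subseteq> R"

definition bbisim :: "('v \<times> 'a act \<times> 'v list) set \<Rightarrow> 'v list \<Rightarrow> 'v list \<Rightarrow> bool" where
  "bbisim Rules = branching_bisimilar (bpa_step Rules)"

definition bbisim_R :: "('v \<times> 'a act \<times> 'v list) set \<Rightarrow> 'v set \<Rightarrow> 'v list \<Rightarrow> 'v list \<Rightarrow> bool" where
  "bbisim_R Rules R = branching_bisimilar (bpa_step_R Rules R)"

definition Rset :: "('v \<times> 'a act \<times> 'v list) set \<Rightarrow> 'v list \<Rightarrow> 'v set" where
  "Rset Rules \<gamma> = {X. bbisim Rules (X # \<gamma>) \<gamma>}"

definition canon_states :: "('v \<times> 'a act \<times> 'v list) set \<Rightarrow> 'v set set" where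
  "canon_states Rules = range (Rset Rules)"

definition redundancy_free :: "('v \<times> 'a act \<times> 'v list) set \<Rightarrow> 'v list \<Rightarrow> 'v list \<Rightarrow> bool" where
  "redundancy_free Rules \<alpha> \<gamma> \<longleftrightarrow>
     \<not> (\<exists>\<delta> X \<beta>. \<alpha> = \<delta> @ X # \<beta> \<and> bbisim Rules (X # \<beta> @ \<gamma>) (\<beta> @ \<gamma>))"

definition lex_less :: "'v::linorder list \<Rightarrow> 'v list \<Rightarrow> bool" where
  "lex_less \<alpha> \<beta> \<longleftrightarrow>
     (\<exists>\<delta>. \<delta> \<noteq> [] \<and> \<beta> = \<delta> @ \<alpha>) \<or>
     (\<exists>\<alpha>' \<beta>' A B \<gamma>. \<alpha> = \<alpha>' @ A # \<gamma> \<and> \<beta> = \<beta>' @ B # \<gamma> \<and> A < B)"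

definition out_candidates :: "('v \<times> 'a act \<times> 'v list) set \<Rightarrow> 'v list \<Rightarrow> 'v \<Rightarrow> 'v list set" where
  "out_candidates Rules \<gamma> A =
     {\<alpha>. bbisim Rules (\<alpha> @ \<gamma>) (A # \<gamma>) \<and> redundancy_free Rules \<alpha> \<gamma>}"

definition canon_out :: "('v::linorder \<times> 'a act \<times> 'v list) set \<Rightarrow> 'v list \<Rightarrow> 'v \<Rightarrow> 'v list" where
  "canon_out Rules \<gamma> A =
     (THE \<alpha>. \<alpha> \<in> out_candidates Rules \<gamma> A
        \<and> (\<forall>\<beta> \<in> out_candidates Rules \<gamma> A. length \<beta> \<le> length \<alpha>)
        \<and> (\<forall>\<beta> \<in> out_candidates Rules \<gamma> A. length \<beta> = length \<alpha> \<longrightarrow> \<beta> = \<alpha> \<or> lex_less \<alpha> \<beta>))"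

text \<open>Transition function: Delta(R_gamma, A) = (R_{A gamma}, alpha), computed from some
  representative gamma of the state R (the paper shows it depends only on R_gamma).\<close>
definition canon_delta :: "('v::linorder \<times> 'a act \<times> 'v list) set \<Rightarrow> 'v set \<Rightarrow> 'v \<Rightarrow> 'v set \<times> 'v list" where
  "canon_delta Rules R A =
     (let \<gamma> = (SOME \<gamma>. Rset Rules \<gamma> = R) in (Rset Rules (A # \<gamma>), canon_out Rules \<gamma> A))"

text \<open>Transducers read right to left: run on the reversed input; for input alpha A,
  first process A from q giving (q', g), then alpha from q'; output is (output of alpha) @ g.\<close>
fun run_rev :: "('q \<Rightarrow> 'v \<Rightarrow> 'q \<times> 'w list) \<Rightarrow> 'q \<Rightarrow> 'v list \<Rightarrow> 'w list" where
  "run_rev d q [] = []"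
| "run_rev d q (A # rs) = (case d q A of (q', g) \<Rightarrow> run_rev d q' rs @ g)"

definition transducer_output :: "('q \<Rightarrow> 'v \<Rightarrow> 'q \<times> 'w list) \<Rightarrow> 'q \<Rightarrow> 'v list \<Rightarrow> 'w list" where
  "transducer_output d q \<alpha> = run_rev d q (rev \<alpha>)"

definition canon_T :: "('v::linorder \<times> 'a act \<times> 'v list) set \<Rightarrow> 'v set \<Rightarrow> 'v list \<Rightarrow> 'v list" where
  "canon_T Rules R = transducer_output (canon_delta Rules) R"

end

theory Submission
  imports Defs "HOL-Library.List_Lexorder"
begin
definition taus :: "('s \<Rightarrow> 'a act \<Rightarrow> 's \<Rightarrow> bool) \<Rightarrow> 's \<Rightarrow> 's \<Rightarrow> bool" where
  "taus tr = (\<lambda>x y. tr x Tau y)\<^sup>*\<^sup>*"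

definition semi_sim :: "('s \<Rightarrow> 'a act \<Rightarrow> 's \<Rightarrow> bool) \<Rightarrow> ('s \<times> 's) set \<Rightarrow> bool" where
  "semi_sim tr B \<longleftrightarrow>
     (\<forall>s t a s'. (s, t) \<in> B \<longrightarrow> tr s a s' \<longrightarrow>
        ((a = Tau \<and> (\<exists>t'. taus tr t t' \<and> (s, t') \<in> B \<and> (s', t') \<in> B)) \<or>
         (\<exists>t'' t'. taus tr t t'' \<and> tr t'' a t' \<and> (s, t'') \<in> B \<and> (s', t') \<in> B)))"

definition semi_bisim where "semi_bisim tr B \<longleftrightarrow> semi_sim tr B \<and> semi_sim tr (B\<inverse>)"

definition SB where "SB tr = {(s,t). \<exists>B. semi_bisim tr B \<and> (s,t) \<in> B}"

lemma tau_path_taus: "tau_path tr t ts \<Longrightarrow> taus tr t (last (t # ts))"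
  unfolding taus_def
  by (induction ts arbitrary: t) (auto intro: converse_rtranclp_into_rtranclp)

lemma tau_path_mem_taus: "tau_path tr t ts \<Longrightarrow> u \<in> set ts \<Longrightarrow> taus tr t u \<and> taus tr u (last (t # ts))"
proof (induction ts arbitrary: t)
  case Nil then show ?case by simp
next
  case (Cons v vs)
  then have tv: "tr t Tau v" and p: "tau_path tr v vs" by auto
  show ?case
  proof (cases "u = v")
    case True
    then show ?thesis using tv tau_path_taus[OF p] unfolding taus_def by auto
  next
    case False
    then have "u \<in> set vs" using Cons by auto
    from Cons.IH[OF p this] tv show ?thesis unfolding taus_def
      by (auto intro: converse_rtranclp_into_rtranclp)
  qed
qed

lemma taus_tau_path: "taus tr t t' \<Longrightarrow> \<exists>ts. tau_path tr t ts \<and> last (t # ts) = t'"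
  unfolding taus_def
proof (induction rule: converse_rtranclp_induct)
  case base then show ?case by (intro exI[of _ "[]"]) auto
next
  case (step y z)
  then obtain ts where "tau_path tr z ts" "last (z # ts) = t'" by auto
  with step show ?case by (intro exI[of _ "z # ts"]) auto
qed

lemma branching_imp_semi: "branching_sim tr B \<Longrightarrow> semi_sim tr B"
  unfolding branching_sim_def semi_sim_def
proof (intro allI impI)
  fix s t a s'
  assume H: "\<forall>s t a s'. (s, t) \<in> B \<longrightarrow> tr s a s' \<longrightarrow>
        ((a = Tau \<and> (s', t) \<in> B) \<or>
         (\<exists>ts t'. tau_path tr t ts \<and> tr (last (t # ts)) a t' \<and> (s', t') \<in> B
                 \<and> (\<forall>u \<in> set ts. (s, u) \<in> B)))"
    and st: "(s, t) \<in> B" and m: "tr s a s'"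
  from H st m show "(a = Tau \<and> (\<exists>t'. taus tr t t' \<and> (s, t') \<in> B \<and> (s', t') \<in> B)) \<or>
         (\<exists>t'' t'. taus tr t t'' \<and> tr t'' a t' \<and> (s, t'') \<in> B \<and> (s', t') \<in> B)"
  proof (elim allE impE disjE conjE exE)
    assume "a = Tau" "(s', t) \<in> B"
    then show ?thesis using st unfolding taus_def by auto
  next
    fix ts t'
    assume p: "tau_path tr t ts" "tr (last (t # ts)) a t'" "(s', t') \<in> B" "\<forall>u\<in>set ts. (s, u) \<in> B"
    have "(s, last (t # ts)) \<in> B"
      using p(4) st by (cases ts) auto
    then show ?thesis using p tau_path_taus[OF p(1)] by blast
  qed auto
qed

lemma semi_taus:
  assumes "semi_sim tr B" "(s, t) \<in> B" "taus tr s s'"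
  shows "\<exists>t'. taus tr t t' \<and> (s', t') \<in> B"
  using assms(3) unfolding taus_def
proof (induction rule: rtranclp_induct)
  case base then show ?case using assms(2) by auto
next
  case (step y z)
  then obtain t1 where t1: "(\<lambda>x y. tr x Tau y)\<^sup>*\<^sup>* t t1" "(y, t1) \<in> B" by (auto simp: taus_def)
  from assms(1)[unfolded semi_sim_def, rule_format, OF t1(2) step(2)]
  show ?case
  proof (elim disjE conjE exE)
    fix t' assume "taus tr t1 t'" "(z, t') \<in> B"
    then show ?thesis using t1 unfolding taus_def using rtranclp_trans[of "\<lambda>x y. tr x Tau y" t t1 t'] by blast
  next
    fix t'' t' assume "taus tr t1 t''" "tr t'' Tau t'" "(z, t') \<in> B"
    then show ?thesis using t1 unfolding taus_def
      by (meson rtranclp.rtrancl_into_rtrancl rtranclp_trans)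
  qed
qed

lemma taus_trans: "taus tr x y \<Longrightarrow> taus tr y z \<Longrightarrow> taus tr x z"
  unfolding taus_def by auto

lemma semi_sim_comp:
  assumes "semi_sim tr B1" "semi_sim tr B2"
  shows "semi_sim tr (B1 O B2)"
  unfolding semi_sim_def
proof (intro allI impI)
  fix s t a s'
  assume "(s, t) \<in> B1 O B2" and m: "tr s a s'"
  then obtain u where su: "(s, u) \<in> B1" and ut: "(u, t) \<in> B2" by auto
  from assms(1)[unfolded semi_sim_def, rule_format, OF su m]
  show "(a = Tau \<and> (\<exists>t'. taus tr t t' \<and> (s, t') \<in> B1 O B2 \<and> (s', t') \<in> B1 O B2)) \<or>
         (\<exists>t'' t'. taus tr t t'' \<and> tr t'' a t' \<and> (s, t'') \<in> B1 O B2 \<and> (s', t') \<in> B1 O B2)"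
  proof (elim disjE conjE exE)
    fix u' assume h: "a = Tau" "taus tr u u'" "(s, u') \<in> B1" "(s', u') \<in> B1"
    obtain t' where t': "taus tr t t'" "(u', t') \<in> B2"
      using semi_taus[OF assms(2) ut h(2)] by auto
    have "(s, t') \<in> B1 O B2" "(s', t') \<in> B1 O B2" using h t' by (auto intro: relcompI)
    then show ?thesis using h(1) t'(1) by (intro disjI1 conjI exI[where x=t']) auto
  next
    fix u'' u' assume h: "taus tr u u''" "tr u'' a u'" "(s, u'') \<in> B1" "(s', u') \<in> B1"
    obtain t1 where t1: "taus tr t t1" "(u'', t1) \<in> B2"
      using semi_taus[OF assms(2) ut h(1)] by auto
    from assms(2)[unfolded semi_sim_def, rule_format, OF t1(2) h(2)]
    show ?thesis
    proof (elim disjE conjE exE)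
      fix t2 assume g: "a = Tau" "taus tr t1 t2" "(u'', t2) \<in> B2" "(u', t2) \<in> B2"
      have "(s, t2) \<in> B1 O B2" "(s', t2) \<in> B1 O B2" using h g by (auto intro: relcompI)
      moreover have "taus tr t t2" using t1(1) g(2) by (rule taus_trans)
      ultimately show ?thesis using g(1) by (intro disjI1 conjI exI[where x=t2]) auto
    next
      fix t'' t' assume g: "taus tr t1 t''" "tr t'' a t'" "(u'', t'') \<in> B2" "(u', t') \<in> B2"
      have "(s, t'') \<in> B1 O B2" "(s', t') \<in> B1 O B2" using h g by (auto intro: relcompI)
      moreover have "taus tr t t''" using t1(1) g(1) by (rule taus_trans)
      ultimately show ?thesis using g(2) by (intro disjI2 exI[where x=t''] exI[where x=t'] conjI) auto
    qed
  qed
qed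

lemma semi_bisim_comp: "semi_bisim tr B1 \<Longrightarrow> semi_bisim tr B2 \<Longrightarrow> semi_bisim tr (B1 O B2)"
  unfolding semi_bisim_def converse_relcomp by (auto intro: semi_sim_comp)

lemma semi_bisim_conv: "semi_bisim tr B \<Longrightarrow> semi_bisim tr (B\<inverse>)"
  unfolding semi_bisim_def by simp

lemma semi_sim_Id: "semi_sim tr Id"
  unfolding semi_sim_def
proof (intro allI impI disjI2)
  fix s t a s' assume "(s, t) \<in> Id" "tr s a s'"
  then show "\<exists>t'' t'. taus tr t t'' \<and> tr t'' a t' \<and> (s, t'') \<in> Id \<and> (s', t') \<in> Id"
    unfolding taus_def by (intro exI[where x=t] exI[where x=s']) auto
qed

lemma semi_sim_Union:
  assumes "\<And>B. B \<in> F \<Longrightarrow> semi_sim tr B"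
  shows "semi_sim tr (\<Union>F)"
  unfolding semi_sim_def
proof (intro allI impI)
  fix s t a s' assume "(s,t) \<in> \<Union>F" "tr s a s'"
  then obtain B where B: "B \<in> F" "(s,t) \<in> B" by auto
  from assms[OF B(1), unfolded semi_sim_def, rule_format, OF B(2) \<open>tr s a s'\<close>]
  show "(a = Tau \<and> (\<exists>t'. taus tr t t' \<and> (s, t') \<in> \<Union>F \<and> (s', t') \<in> \<Union>F)) \<or>
         (\<exists>t'' t'. taus tr t t'' \<and> tr t'' a t' \<and> (s, t'') \<in> \<Union>F \<and> (s', t') \<in> \<Union>F)"
  proof (elim disjE conjE exE)
    fix t' assume "a = Tau" "taus tr t t'" "(s, t') \<in> B" "(s', t') \<in> B"
    then show ?thesis using B(1) by (intro disjI1 conjI exI[where x=t']) auto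
  next
    fix t'' t' assume "taus tr t t''" "tr t'' a t'" "(s, t'') \<in> B" "(s', t') \<in> B"
    then show ?thesis using B(1) by (intro disjI2 exI[where x=t''] exI[where x=t'] conjI) auto
  qed
qed

lemma SB_eq: "SB tr = \<Union>{B. semi_bisim tr B}"
  unfolding SB_def by auto

lemma SB_semi: "semi_bisim tr (SB tr)"
proof -
  have "semi_sim tr (\<Union>{B. semi_bisim tr B})"
    by (rule semi_sim_Union) (auto simp: semi_bisim_def)
  moreover have "(\<Union>{B. semi_bisim tr B})\<inverse> = \<Union>{B\<inverse> |B. semi_bisim tr B}" by auto
  moreover have "semi_sim tr (\<Union>{B\<inverse> |B. semi_bisim tr B})"
    by (rule semi_sim_Union) (auto simp: semi_bisim_def)
  ultimately show ?thesis unfolding semi_bisim_def SB_eq by simp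
qed

lemma SB_sym: "(s,t) \<in> SB tr \<Longrightarrow> (t,s) \<in> SB tr"
  unfolding SB_def using semi_bisim_conv by blast

lemma SB_trans: "(s,t) \<in> SB tr \<Longrightarrow> (t,u) \<in> SB tr \<Longrightarrow> (s,u) \<in> SB tr"
proof -
  assume "(s,t) \<in> SB tr" "(t,u) \<in> SB tr"
  then have "(s,u) \<in> SB tr O SB tr" by auto
  moreover have "semi_bisim tr (SB tr O SB tr)" using semi_bisim_comp SB_semi by blast
  ultimately show ?thesis unfolding SB_def by blast
qed

definition smatch where
  "smatch tr B s t a s' \<longleftrightarrow> ((a = Tau \<and> (\<exists>t'. taus tr t t' \<and> (s, t') \<in> B \<and> (s', t') \<in> B)) \<or>
         (\<exists>t'' t'. taus tr t t'' \<and> tr t'' a t' \<and> (s, t'') \<in> B \<and> (s', t') \<in> B))"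

lemma smatch_mono: "smatch tr B s t a s' \<Longrightarrow> B \<subseteq> B' \<Longrightarrow> smatch tr B' s t a s'"
  unfolding smatch_def by blast

lemma smatch_prefix: "smatch tr B s t a s' \<Longrightarrow> taus tr t0 t \<Longrightarrow> smatch tr B s t0 a s'"
  unfolding smatch_def by (meson taus_trans)

lemma semi_sim_smatch: "semi_sim tr B \<longleftrightarrow> (\<forall>s t a s'. (s,t) \<in> B \<longrightarrow> tr s a s' \<longrightarrow> smatch tr B s t a s')"
  unfolding semi_sim_def smatch_def by simp

lemma SB_stutter:
  assumes rs: "(r, s) \<in> SB tr" and r2s: "(r2, s) \<in> SB tr" and r1: "taus tr r r1" and r12: "taus tr r1 r2"
  shows "(r1, s) \<in> SB tr"
proof -
  let ?R = "SB tr \<union> {(r1, s)}"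
  have S: "semi_sim tr (SB tr)" "semi_sim tr ((SB tr)\<inverse>)" using SB_semi unfolding semi_bisim_def by auto
  have sub: "SB tr \<subseteq> ?R" "(SB tr)\<inverse> \<subseteq> ?R\<inverse>" by auto
  have "semi_sim tr ?R"
    unfolding semi_sim_smatch
  proof (intro allI impI)
    fix x y a x' assume xy: "(x, y) \<in> ?R" and m: "tr x a x'"
    show "smatch tr ?R x y a x'"
    proof (cases "(x, y) \<in> SB tr")
      case True
      from S(1)[unfolded semi_sim_smatch, rule_format, OF True m] show ?thesis
        using sub(1) by (rule smatch_mono)
    next
      case False
      then have xy: "x = r1" "y = s" using xy by auto
      obtain s1 where s1: "taus tr s s1" "(r1, s1) \<in> SB tr" using semi_taus[OF S(1) rs r1] by auto
      from S(1)[unfolded semi_sim_smatch, rule_format, OF s1(2) m[unfolded xy]]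
      have "smatch tr (SB tr) r1 s1 a x'" .
      then have "smatch tr ?R r1 s1 a x'" using sub(1) by (rule smatch_mono)
      then show ?thesis unfolding xy using s1(1) by (rule smatch_prefix)
    qed
  qed
  moreover have "semi_sim tr (?R\<inverse>)"
    unfolding semi_sim_smatch
  proof (intro allI impI)
    fix x y a x' assume xy: "(x, y) \<in> ?R\<inverse>" and m: "tr x a x'"
    show "smatch tr (?R\<inverse>) x y a x'"
    proof (cases "(x, y) \<in> (SB tr)\<inverse>")
      case True
      from S(2)[unfolded semi_sim_smatch, rule_format, OF True m] show ?thesis
        using sub(2) by (rule smatch_mono)
    next
      case False
      then have xy: "x = s" "y = r1" using xy by auto
      have "(s, r2) \<in> (SB tr)\<inverse>" using r2s by auto
      from S(2)[unfolded semi_sim_smatch, rule_format, OF this m[unfolded xy]]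
      have "smatch tr ((SB tr)\<inverse>) s r2 a x'" .
      then have "smatch tr (?R\<inverse>) s r2 a x'" using sub(2) by (rule smatch_mono)
      then show ?thesis unfolding xy using r12 by (rule smatch_prefix)
    qed
  qed
  ultimately have "semi_bisim tr ?R" unfolding semi_bisim_def by auto
  then show ?thesis unfolding SB_def by blast
qed

lemma SB_branching_sim: "branching_sim tr (SB tr)"
  unfolding branching_sim_def
proof (intro allI impI)
  fix s t a s' assume st: "(s, t) \<in> SB tr" and m: "tr s a s'"
  have S: "semi_sim tr (SB tr)" using SB_semi unfolding semi_bisim_def by auto
  have inter: "\<forall>u\<in>set ts. (s, u) \<in> SB tr" if "tau_path tr t ts" "(s, last (t # ts)) \<in> SB tr" for ts
  proof
    fix u assume u: "u \<in> set ts"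
    from tau_path_mem_taus[OF that(1) u] have "taus tr t u" "taus tr u (last (t # ts))" by auto
    from SB_stutter[OF SB_sym[OF st] SB_sym[OF that(2)] this] show "(s, u) \<in> SB tr" by (rule SB_sym)
  qed
  from S[unfolded semi_sim_def, rule_format, OF st m]
  show "(a = Tau \<and> (s', t) \<in> SB tr) \<or>
         (\<exists>ts t'. tau_path tr t ts \<and> tr (last (t # ts)) a t' \<and> (s', t') \<in> SB tr
                 \<and> (\<forall>u \<in> set ts. (s, u) \<in> SB tr))"
  proof (elim disjE conjE exE)
    fix t' assume a: "a = Tau" and h: "taus tr t t'" "(s, t') \<in> SB tr" "(s', t') \<in> SB tr"
    show ?thesis
    proof (cases "t = t'")
      case True then show ?thesis using a h by blast
    next
      case False
      from h(1) have hh: "(\<lambda>x y. tr x Tau y)\<^sup>*\<^sup>* t t'" by (simp add: taus_def)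
      obtain tk where tk: "taus tr t tk" "tr tk Tau t'"
        using hh False rtranclp.cases[of "\<lambda>x y. tr x Tau y" t t'] unfolding taus_def by blast
      obtain ts where ts: "tau_path tr t ts" "last (t # ts) = tk" using taus_tau_path[OF tk(1)] by auto
      have "taus tr tk t'" unfolding taus_def using tk(2) by auto
      from SB_stutter[OF SB_sym[OF st] SB_sym[OF h(2)] tk(1) this]
      have "(s, tk) \<in> SB tr" by (rule SB_sym)
      then have "\<forall>u\<in>set ts. (s, u) \<in> SB tr" using inter[OF ts(1)] ts by auto
      moreover have "tr (last (t # ts)) a t'" using ts(2) tk(2) a by simp
      ultimately show ?thesis using ts(1) h(3)
        apply - apply (rule disjI2) apply (rule exI[where x=ts]) apply (rule exI[where x=t']) by simp
    qed
  next
    fix t'' t' assume h: "taus tr t t''" "tr t'' a t'" "(s, t'') \<in> SB tr" "(s', t') \<in> SB tr"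
    obtain ts where ts: "tau_path tr t ts" "last (t # ts) = t''" using taus_tau_path[OF h(1)] by auto
    then have "\<forall>u\<in>set ts. (s, u) \<in> SB tr" using inter[OF ts(1)] h by auto
    moreover have "tr (last (t # ts)) a t'" using ts(2) h(2) by simp
    ultimately show ?thesis using ts(1) h(4)
        apply - apply (rule disjI2) apply (rule exI[where x=ts]) apply (rule exI[where x=t']) by simp
  qed
qed

lemma bb_eq_SB: "branching_bisimilar tr s t \<longleftrightarrow> (s, t) \<in> SB tr"
proof
  assume "branching_bisimilar tr s t"
  then obtain B where "branching_bisimulation tr B" "(s,t) \<in> B" unfolding branching_bisimilar_def by auto
  then show "(s,t) \<in> SB tr" unfolding SB_def semi_bisim_def branching_bisimulation_def
    using branching_imp_semi by blast
next
  assume "(s, t) \<in> SB tr"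
  moreover have "branching_bisimulation tr (SB tr)"
  proof -
    have "(SB tr)\<inverse> = SB tr" using SB_sym by auto
    then show ?thesis unfolding branching_bisimulation_def using SB_branching_sim by simp
  qed
  ultimately show "branching_bisimilar tr s t" unfolding branching_bisimilar_def by auto
qed

lemma bb_refl: "branching_bisimilar tr s s"
proof -
  have "semi_bisim tr Id" unfolding semi_bisim_def using semi_sim_Id by simp
  then show ?thesis unfolding bb_eq_SB SB_def by auto
qed

lemma bb_sym: "branching_bisimilar tr s t \<Longrightarrow> branching_bisimilar tr t s"
  unfolding bb_eq_SB by (rule SB_sym)

lemma bb_trans: "branching_bisimilar tr s t \<Longrightarrow> branching_bisimilar tr t u \<Longrightarrow> branching_bisimilar tr s u"
  unfolding bb_eq_SB by (rule SB_trans)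

lemma bb_bisim: "branching_sim tr {(s,t). branching_bisimilar tr s t}"
  unfolding bb_eq_SB using SB_branching_sim by simp

lemma bb_match:
  assumes "branching_bisimilar tr s t" "tr s a s'"
  shows "(a = Tau \<and> branching_bisimilar tr s' t) \<or>
         (\<exists>ts t'. tau_path tr t ts \<and> tr (last (t # ts)) a t' \<and> branching_bisimilar tr s' t'
                 \<and> (\<forall>u \<in> set ts. branching_bisimilar tr s u))"
  using bb_bisim[of tr, unfolded branching_sim_def, rule_format, of s t a s'] assms by auto

lemma bb_by_sym:
  assumes "branching_sim tr B" "\<And>x y. (x,y) \<in> B \<Longrightarrow> (y,x) \<in> B" "(s,t) \<in> B"
  shows "branching_bisimilar tr s t"
proof -
  have "B\<inverse> = B" using assms(2) by auto
  then show ?thesis using assms unfolding branching_bisimilar_def branching_bisimulation_def by metis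
qed

abbreviation steps where "steps Rules x y \<equiv> \<exists>a. bpa_step Rules x a y"

lemma step_Nil[simp]: "\<not> bpa_step Rules [] a s"
  unfolding bpa_step_def by auto

lemma step_append: "bpa_step Rules x a y \<Longrightarrow> bpa_step Rules (x @ w) a (y @ w)"
  unfolding bpa_step_def by auto

lemma step_append_inv:
  "bpa_step Rules (x @ w) a u \<Longrightarrow> x \<noteq> [] \<Longrightarrow> \<exists>x'. u = x' @ w \<and> bpa_step Rules x a x'"
  unfolding bpa_step_def by (cases x) auto

lemma steps_append: "(steps Rules)\<^sup>*\<^sup>* x y \<Longrightarrow> (steps Rules)\<^sup>*\<^sup>* (x @ w) (y @ w)"
proof (induction rule: rtranclp_induct)
  case base then show ?case by simp
next
  case (step y z)
  then obtain a where "bpa_step Rules y a z" by auto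
  then have "steps Rules (y @ w) (z @ w)" using step_append by blast
  with step(3) show ?case by (rule rtranclp.rtrancl_into_rtrancl)
qed

lemma normed_reach:
  assumes "normed Rules" shows "(steps Rules)\<^sup>*\<^sup>* s []"
proof (induction s)
  case Nil then show ?case by simp
next
  case (Cons X s)
  have "(steps Rules)\<^sup>*\<^sup>* [X] []" using assms unfolding normed_def by auto
  from steps_append[OF this, of s] have "(steps Rules)\<^sup>*\<^sup>* (X # s) s" by simp
  then show ?case using Cons by (rule rtranclp_trans)
qed

lemma tau_path_append:
  "tau_path (bpa_step Rules) b bs \<Longrightarrow> tau_path (bpa_step Rules) (b @ w) (map (\<lambda>x. x @ w) bs)"
  by (induction bs arbitrary: b) (auto intro: step_append)

lemma last_map_append': "last ((b @ w) # map (\<lambda>x. x @ w) bs) = last (b # bs) @ w"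
  by (induction bs arbitrary: b) auto

abbreviation bb where "bb Rules \<equiv> bbisim Rules"

lemma bb_refl': "bbisim Rules s s" unfolding bbisim_def by (rule bb_refl)
lemma bb_sym': "bbisim Rules s t \<Longrightarrow> bbisim Rules t s" unfolding bbisim_def by (rule bb_sym)
lemma bb_trans': "bbisim Rules s t \<Longrightarrow> bbisim Rules t u \<Longrightarrow> bbisim Rules s u"
  unfolding bbisim_def by (rule bb_trans)

lemma bb_match':
  assumes "bbisim Rules s t" "bpa_step Rules s a s'"
  shows "(a = Tau \<and> bbisim Rules s' t) \<or>
         (\<exists>ts t'. tau_path (bpa_step Rules) t ts \<and> bpa_step Rules (last (t # ts)) a t' \<and> bbisim Rules s' t'
                 \<and> (\<forall>u \<in> set ts. bbisim Rules s u))"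
  using assms unfolding bbisim_def by (rule bb_match)

lemma bb_via:
  assumes "branching_sim (bpa_step Rules) B" "\<And>x y. (x,y) \<in> B \<Longrightarrow> (y,x) \<in> B" "(s,t) \<in> B"
  shows "bbisim Rules s t"
  unfolding bbisim_def using assms by (rule bb_by_sym)

lemma tau_path_Nil_start: "tau_path (bpa_step Rules) [] ts \<Longrightarrow> ts = []"
  by (cases ts) auto

lemma to_nil:
  assumes "normed Rules" "bbisim Rules b []"
  shows "\<exists>bs. tau_path (bpa_step Rules) b bs \<and> last (b # bs) = [] \<and> (\<forall>u\<in>set bs. bbisim Rules u [])"
proof -
  have "(steps Rules)\<^sup>*\<^sup>* b []" using normed_reach[OF assms(1)] .
  then show ?thesis using assms(2)
  proof (induction rule: converse_rtranclp_induct)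
    case base then show ?case by (intro exI[where x="[]"]) auto
  next
    case (step y z)
    then obtain a where m: "bpa_step Rules y a z" by auto
    from bb_match'[OF step(4) m] show ?case
    proof (elim disjE conjE exE)
      assume "a = Tau" "bbisim Rules z []"
      then obtain bs where "tau_path (bpa_step Rules) z bs \<and> last (z # bs) = [] \<and> (\<forall>u\<in>set bs. bbisim Rules u [])"
        using step(3) by auto
      then show ?thesis using m \<open>a = Tau\<close> \<open>bbisim Rules z []\<close>
        by (intro exI[where x="z # bs"]) auto
    next
      fix ts t' assume "tau_path (bpa_step Rules) [] ts" "bpa_step Rules (last ([] # ts)) a t'"
      then show ?thesis using tau_path_Nil_start by fastforce
    qed
  qed
qed

section \<open>Congruences\<close>

lemma bb_left_cong:
  assumes "bbisim Rules s t" shows "bbisim Rules (\<sigma> @ s) (\<sigma> @ t)"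
proof -
  let ?B = "{(\<sigma> @ s, \<sigma> @ t) | \<sigma> s t. bbisim Rules s t}"
  have "branching_sim (bpa_step Rules) ?B"
    unfolding branching_sim_def
  proof (intro allI impI)
    fix x y a x' assume xy: "(x, y) \<in> ?B" and m: "bpa_step Rules x a x'"
    then obtain \<sigma> s t where e: "x = \<sigma> @ s" "y = \<sigma> @ t" "bbisim Rules s t" by auto
    show "(a = Tau \<and> (x', y) \<in> ?B) \<or>
         (\<exists>ts t'. tau_path (bpa_step Rules) y ts \<and> bpa_step Rules (last (y # ts)) a t' \<and> (x', t') \<in> ?B
                 \<and> (\<forall>u \<in> set ts. (x, u) \<in> ?B))"
    proof (cases "\<sigma> = []")
      case True
      have inB: "bbisim Rules p q \<Longrightarrow> (p, q) \<in> ?B" for p q by (metis (mono_tags, lifting) append_Nil mem_Collect_eq)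
      from bb_match'[OF e(3) m[unfolded e True, simplified]] show ?thesis
      proof (elim disjE conjE exE)
        assume "a = Tau" "bbisim Rules x' t" then show ?thesis using inB e True by auto
      next
        fix ts t' assume h: "tau_path (bpa_step Rules) t ts" "bpa_step Rules (last (t # ts)) a t'"
          "bbisim Rules x' t'" "\<forall>u \<in> set ts. bbisim Rules s u"
        have "\<forall>u \<in> set ts. (x, u) \<in> ?B" using h(4) inB e True by auto
        then show ?thesis using h inB e True
          apply - apply (rule disjI2) apply (rule exI[where x=ts]) apply (rule exI[where x=t']) by simp
      qed
    next
      case False
      obtain \<sigma>' where x': "x' = \<sigma>' @ s" "bpa_step Rules \<sigma> a \<sigma>'" using step_append_inv[OF m[unfolded e] False] by auto
      have "bpa_step Rules (last (y # [])) a (\<sigma>' @ t)" using step_append[OF x'(2)] e by simp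
      moreover have "(x', \<sigma>' @ t) \<in> ?B" using x' e by blast
      ultimately show ?thesis
        apply - apply (rule disjI2) apply (rule exI[where x="[]"]) apply (rule exI[where x="\<sigma>' @ t"]) by simp
    qed
  qed
  moreover have "(x,y) \<in> ?B \<Longrightarrow> (y,x) \<in> ?B" for x y using bb_sym' by blast
  moreover have "(\<sigma> @ s, \<sigma> @ t) \<in> ?B" using assms by blast
  ultimately show ?thesis by (rule bb_via)
qed

lemma bb_right_cong:
  assumes N: "normed Rules" and ab: "bbisim Rules \<alpha> \<beta>" shows "bbisim Rules (\<alpha> @ w) (\<beta> @ w)"
proof -
  let ?B = "{(\<alpha> @ w, \<beta> @ w) | \<alpha> \<beta>. bbisim Rules \<alpha> \<beta>} \<union> Id"
  have "branching_sim (bpa_step Rules) ?B"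
    unfolding branching_sim_def
  proof (intro allI impI)
    fix x y a x' assume xy: "(x, y) \<in> ?B" and m: "bpa_step Rules x a x'"
    show "(a = Tau \<and> (x', y) \<in> ?B) \<or>
         (\<exists>ts t'. tau_path (bpa_step Rules) y ts \<and> bpa_step Rules (last (y # ts)) a t' \<and> (x', t') \<in> ?B
                 \<and> (\<forall>u \<in> set ts. (x, u) \<in> ?B))"
    proof (cases "(x, y) \<in> Id")
      case True
      then show ?thesis using m
        apply - apply (rule disjI2) apply (rule exI[where x="[]"]) apply (rule exI[where x="x'"]) by simp
    next
      case False
      then obtain \<alpha> \<beta> where e: "x = \<alpha> @ w" "y = \<beta> @ w" "bbisim Rules \<alpha> \<beta>" using xy by auto
      show ?thesis
      proof (cases "\<alpha> = []")
        case True
        have "bbisim Rules \<beta> []" using e(3) True bb_sym' by blast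
        from to_nil[OF N this] obtain bs where bs: "tau_path (bpa_step Rules) \<beta> bs" "last (\<beta> # bs) = []"
          "\<forall>u\<in>set bs. bbisim Rules u []" by auto
        have p: "tau_path (bpa_step Rules) y (map (\<lambda>x. x @ w) bs)" using tau_path_append[OF bs(1)] e by simp
        have l: "last (y # map (\<lambda>x. x @ w) bs) = w" using last_map_append'[of \<beta> w bs] bs(2) e by simp
        have i: "\<forall>u \<in> set (map (\<lambda>x. x @ w) bs). (x, u) \<in> ?B"
        proof
          fix u assume "u \<in> set (map (\<lambda>x. x @ w) bs)"
          then obtain b where "b \<in> set bs" "u = b @ w" by auto
          then have "bbisim Rules [] b" using bs(3) bb_sym' by blast
          then show "(x, u) \<in> ?B" using \<open>u = b @ w\<close> e True by blast
        qed
        have "bpa_step Rules (last (y # map (\<lambda>x. x @ w) bs)) a x'" using l m e True by simp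
        then show ?thesis using p i
          apply - apply (rule disjI2) apply (rule exI[where x="map (\<lambda>x. x @ w) bs"]) apply (rule exI[where x="x'"]) by simp
      next
        case False
        obtain \<alpha>' where x': "x' = \<alpha>' @ w" "bpa_step Rules \<alpha> a \<alpha>'" using step_append_inv[OF m[unfolded e] False] by auto
        from bb_match'[OF e(3) x'(2)] show ?thesis
        proof (elim disjE conjE exE)
          assume "a = Tau" "bbisim Rules \<alpha>' \<beta>" then show ?thesis using x' e by blast
        next
          fix ts t' assume h: "tau_path (bpa_step Rules) \<beta> ts" "bpa_step Rules (last (\<beta> # ts)) a t'"
            "bbisim Rules \<alpha>' t'" "\<forall>u \<in> set ts. bbisim Rules \<alpha> u"
          have p: "tau_path (bpa_step Rules) y (map (\<lambda>x. x @ w) ts)" using tau_path_append[OF h(1)] e by simp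
          have l: "last (y # map (\<lambda>x. x @ w) ts) = last (\<beta> # ts) @ w" using last_map_append'[of \<beta> w ts] e by simp
          have i: "\<forall>u \<in> set (map (\<lambda>x. x @ w) ts). (x, u) \<in> ?B" using h(4) e by auto
          have st: "bpa_step Rules (last (y # map (\<lambda>x. x @ w) ts)) a (t' @ w)" using l step_append[OF h(2)] by simp
          have "(x', t' @ w) \<in> ?B" using x' h(3) by blast
          then show ?thesis using p i st
            apply - apply (rule disjI2) apply (rule exI[where x="map (\<lambda>x. x @ w) ts"]) apply (rule exI[where x="t' @ w"]) by simp
        qed
      qed
    qed
  qed
  moreover have "(x,y) \<in> ?B \<Longrightarrow> (y,x) \<in> ?B" for x y using bb_sym' by blast
  moreover have "(\<alpha> @ w, \<beta> @ w) \<in> ?B" using ab by blast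
  ultimately show ?thesis by (rule bb_via)
qed

inductive reachn :: "('v \<times> 'a act \<times> 'v list) set \<Rightarrow> 'v list \<Rightarrow> nat \<Rightarrow> bool" for Rules where
  rn_nil: "reachn Rules [] n"
| rn_inert: "bpa_step Rules s a s' \<Longrightarrow> bbisim Rules s s' \<Longrightarrow> reachn Rules s' n \<Longrightarrow> reachn Rules s n"
| rn_step: "bpa_step Rules s a s' \<Longrightarrow> reachn Rules s' n \<Longrightarrow> reachn Rules s (Suc n)"

lemma reachn_mono: "reachn Rules s n \<Longrightarrow> n \<le> m \<Longrightarrow> reachn Rules s m"
proof (induction arbitrary: m rule: reachn.induct)
  case (rn_nil n) show ?case by (rule reachn.rn_nil)
next
  case (rn_inert s a s' n) then show ?case by (blast intro: reachn.rn_inert)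
next
  case (rn_step s a s' n)
  then obtain m' where "m = Suc m'" "n \<le> m'" by (cases m) auto
  then show ?case using rn_step by (blast intro: reachn.rn_step)
qed

lemma reachn_exists: assumes "normed Rules" shows "\<exists>n. reachn Rules s n"
proof -
  have "(steps Rules)\<^sup>*\<^sup>* s []" using normed_reach[OF assms] .
  then show ?thesis
  proof (induction rule: converse_rtranclp_induct)
    case base then show ?case by (blast intro: rn_nil)
  next
    case (step y z) then show ?case by (blast intro: rn_step)
  qed
qed

lemma path_inert:
  "tau_path (bpa_step Rules) t ts \<Longrightarrow> (\<forall>u\<in>set (t # ts). bbisim Rules u c)
   \<Longrightarrow> reachn Rules (last (t # ts)) n \<Longrightarrow> reachn Rules t n"
proof (induction ts arbitrary: t)
  case Nil then show ?case by simp
next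
  case (Cons u us)
  then have r: "reachn Rules u n" by auto
  have "bbisim Rules t u" using Cons(3) bb_sym' bb_trans' by (meson list.set_intros(1) list.set_intros(2))
  then show ?case using Cons(2) r by (auto intro: rn_inert)
qed

lemma reachn_inv:
  assumes N: "normed Rules"
  shows "reachn Rules s n \<Longrightarrow> bbisim Rules s t \<Longrightarrow> reachn Rules t n"
proof (induction arbitrary: t rule: reachn.induct)
  case (rn_nil n)
  then have "bbisim Rules t []" by (rule bb_sym')
  from to_nil[OF N this] obtain bs where bs: "tau_path (bpa_step Rules) t bs" "last (t # bs) = []"
    "\<forall>u\<in>set bs. bbisim Rules u []" by auto
  have "\<forall>u\<in>set (t # bs). bbisim Rules u []" using bs(3) \<open>bbisim Rules t []\<close> by auto
  from path_inert[OF bs(1) this] show ?case using bs(2) by (simp add: reachn.rn_nil)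
next
  case (rn_inert s a s' n)
  then show ?case using bb_sym' bb_trans' by blast
next
  case (rn_step s a s' n)
  from bb_match'[OF rn_step(4) rn_step(1)] show ?case
  proof (elim disjE conjE exE)
    assume "a = Tau" "bbisim Rules s' t"
    then show ?thesis using rn_step(3) reachn_mono by (meson le_SucI order_refl)
  next
    fix ts t' assume h: "tau_path (bpa_step Rules) t ts" "bpa_step Rules (last (t # ts)) a t'"
      "bbisim Rules s' t'" "\<forall>u\<in>set ts. bbisim Rules s u"
    have "reachn Rules t' n" using rn_step(3) h(3) by blast
    then have "reachn Rules (last (t # ts)) (Suc n)" using h(2) by (rule reachn.rn_step[rotated])
    moreover have "\<forall>u\<in>set (t # ts). bbisim Rules u s" using h(4) rn_step(4) bb_sym' by auto
    ultimately show ?thesis using path_inert[OF h(1)] by blast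
  qed
qed

lemma reachn_split_aux:
  "reachn Rules x n \<Longrightarrow> x = \<mu> @ v \<Longrightarrow> \<mu> \<noteq> [] \<Longrightarrow>
    \<exists>m \<le> n. reachn Rules v m \<and> (m = n \<longrightarrow> bbisim Rules (\<mu> @ v) v)"
proof (induction arbitrary: \<mu> rule: reachn.induct)
  case (rn_nil n) then show ?case by simp
next
  case (rn_inert s a s' n)
  obtain \<mu>' where m: "s' = \<mu>' @ v" "bpa_step Rules \<mu> a \<mu>'" using step_append_inv rn_inert(5,6) rn_inert(1) by blast
  show ?case
  proof (cases "\<mu>' = []")
    case True
    then show ?thesis using rn_inert m by auto
  next
    case False
    from rn_inert(4)[OF m(1) False] obtain k where "k \<le> n" "reachn Rules v k" "k = n \<longrightarrow> bbisim Rules (\<mu>' @ v) v" by auto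
    then show ?thesis using rn_inert(2,5) m(1) bb_trans' by blast
  qed
next
  case (rn_step s a s' n)
  obtain \<mu>' where m: "s' = \<mu>' @ v" "bpa_step Rules \<mu> a \<mu>'" using step_append_inv rn_step(4,5) rn_step(1) by blast
  show ?case
  proof (cases "\<mu>' = []")
    case True
    then show ?thesis using rn_step m by (intro exI[where x=n]) auto
  next
    case False
    from rn_step(3)[OF m(1) False] obtain k where "k \<le> n" "reachn Rules v k" by auto
    then show ?thesis by (intro exI[where x=k]) auto
  qed
qed

lemma reachn_split:
  "reachn Rules (\<mu> @ v) n \<Longrightarrow> \<exists>m \<le> n. reachn Rules v m \<and> (m = n \<longrightarrow> bbisim Rules (\<mu> @ v) v)"
  using reachn_split_aux[of Rules "\<mu> @ v" n \<mu> v] bb_refl'[of Rules v] by (cases "\<mu> = []") auto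

lemma rf_Cons: "redundancy_free Rules (X # \<beta>) w \<longleftrightarrow> \<not> bbisim Rules (X # \<beta> @ w) (\<beta> @ w) \<and> redundancy_free Rules \<beta> w"
  unfolding redundancy_free_def
  apply (rule iffI)
   apply (metis append_Cons append_Nil)
  apply (clarsimp simp: Cons_eq_append_conv)
  by (metis append_Cons)

lemma rf_Nil[simp]: "redundancy_free Rules [] w"
  unfolding redundancy_free_def by simp

lemma rf_bound:
  "reachn Rules (\<delta> @ w) n \<Longrightarrow> redundancy_free Rules \<delta> w \<Longrightarrow> \<exists>m. reachn Rules w m \<and> m + length \<delta> \<le> n"
proof (induction \<delta> arbitrary: n)
  case Nil then show ?case by auto
next
  case (Cons X \<beta>)
  from Cons(3) have nb: "\<not> bbisim Rules (X # \<beta> @ w) (\<beta> @ w)" and rb: "redundancy_free Rules \<beta> w"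
    by (auto simp: rf_Cons)
  from reachn_split[of Rules "[X]" "\<beta> @ w" n] Cons(2) obtain m where
    "m \<le> n" "reachn Rules (\<beta> @ w) m" "m = n \<longrightarrow> bbisim Rules ([X] @ \<beta> @ w) (\<beta> @ w)" by auto
  with nb have "m < n" by auto
  from Cons(1)[OF \<open>reachn Rules (\<beta> @ w) m\<close> rb] obtain k where "reachn Rules w k" "k + length \<beta> \<le> m" by auto
  then show ?case using \<open>m < n\<close> by (intro exI[where x=k]) auto
qed

lemma lemmaZ:
  assumes N: "normed Rules" and h: "bbisim Rules (\<sigma> @ \<sigma>' @ t) t"
  shows "bbisim Rules (\<sigma>' @ t) t"
proof -
  obtain n where n: "reachn Rules t n" "\<forall>m<n. \<not> reachn Rules t m"
    using reachn_exists[OF N, of t] exists_least_iff[of "reachn Rules t"] by blast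
  have "reachn Rules (\<sigma> @ \<sigma>' @ t) n" using reachn_inv[OF N n(1)] h bb_sym' by blast
  from reachn_split[OF this] obtain m1 where m1: "m1 \<le> n" "reachn Rules (\<sigma>' @ t) m1" by auto
  from reachn_split[OF m1(2)] obtain m2 where m2: "m2 \<le> m1" "reachn Rules t m2"
     "m2 = m1 \<longrightarrow> bbisim Rules (\<sigma>' @ t) t" by auto
  have "\<not> m2 < n" using n(2) m2(2) by auto
  then show ?thesis using m1 m2 by auto
qed

lemma Rstar_bb: "set \<alpha> \<subseteq> Rset Rules \<gamma> \<Longrightarrow> bbisim Rules (\<alpha> @ \<gamma>) \<gamma>"
proof (induction \<alpha>)
  case Nil then show ?case by (simp add: bb_refl')
next
  case (Cons X \<alpha>)
  then have "bbisim Rules (\<alpha> @ \<gamma>) \<gamma>" "bbisim Rules (X # \<gamma>) \<gamma>" by (auto simp: Rset_def)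
  from bb_left_cong[OF this(1), of "[X]"] this(2) show ?case using bb_trans' by fastforce
qed

lemma bb_Rstar:
  assumes N: "normed Rules" and h: "bbisim Rules (\<alpha> @ \<gamma>) \<gamma>" shows "set \<alpha> \<subseteq> Rset Rules \<gamma>"
proof
  fix X assume "X \<in> set \<alpha>"
  then obtain a1 a2 where a: "\<alpha> = a1 @ X # a2" by (meson split_list)
  have "bbisim Rules ((X # a2) @ \<gamma>) \<gamma>" using lemmaZ[OF N, of a1 "X # a2" \<gamma>] h a by simp
  moreover have "bbisim Rules (a2 @ \<gamma>) \<gamma>" using lemmaZ[OF N, of "a1 @ [X]" a2 \<gamma>] h a by simp
  then have "bbisim Rules ([X] @ a2 @ \<gamma>) ([X] @ \<gamma>)" by (rule bb_left_cong)
  ultimately have "bbisim Rules (X # \<gamma>) \<gamma>" using bb_sym' bb_trans' by fastforce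
  then show "X \<in> Rset Rules \<gamma>" by (simp add: Rset_def)
qed

lemma stepR_iff: "bpa_step_R Rules R s a s' \<longleftrightarrow> bpa_step Rules s a s' \<and> \<not> set s \<subseteq> R"
  by (simp add: bpa_step_R_def)

lemma tau_pathR_lift:
  "tau_path (bpa_step_R Rules R) b bs \<Longrightarrow> tau_path (bpa_step Rules) (b @ w) (map (\<lambda>x. x @ w) bs)"
  by (induction bs arbitrary: b) (auto simp: stepR_iff intro: step_append)

lemma bbR_refl: "bbisim_R Rules R s s" unfolding bbisim_R_def by (rule bb_refl)
lemma bbR_sym: "bbisim_R Rules R s t \<Longrightarrow> bbisim_R Rules R t s" unfolding bbisim_R_def by (rule bb_sym)
lemma bbR_trans: "bbisim_R Rules R s t \<Longrightarrow> bbisim_R Rules R t u \<Longrightarrow> bbisim_R Rules R s u"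
  unfolding bbisim_R_def by (rule bb_trans)
lemma bbR_match:
  assumes "bbisim_R Rules R s t" "bpa_step_R Rules R s a s'"
  shows "(a = Tau \<and> bbisim_R Rules R s' t) \<or>
         (\<exists>ts t'. tau_path (bpa_step_R Rules R) t ts \<and> bpa_step_R Rules R (last (t # ts)) a t' \<and> bbisim_R Rules R s' t'
                 \<and> (\<forall>u \<in> set ts. bbisim_R Rules R s u))"
  using assms unfolding bbisim_R_def by (rule bb_match)

lemma bbR_dead: "set \<alpha> \<subseteq> R \<Longrightarrow> set \<beta> \<subseteq> R \<Longrightarrow> bbisim_R Rules R \<alpha> \<beta>"
proof -
  assume a: "set \<alpha> \<subseteq> R" "set \<beta> \<subseteq> R"
  let ?B = "{(x, y). set x \<subseteq> R \<and> set y \<subseteq> R}"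
  have "branching_sim (bpa_step_R Rules R) ?B" unfolding branching_sim_def by (auto simp: stepR_iff)
  moreover have "(x,y) \<in> ?B \<Longrightarrow> (y,x) \<in> ?B" for x y by auto
  ultimately show ?thesis unfolding bbisim_R_def using a by (intro bb_by_sym) auto
qed

lemma tau_pathR_Nil: "tau_path (bpa_step_R Rules R) [] ts \<Longrightarrow> ts = []"
  by (cases ts) (auto simp: stepR_iff)

lemma lemmaN:
  assumes N: "normed Rules" and h: "bbisim_R Rules R \<alpha> []"
  shows "\<exists>as. tau_path (bpa_step_R Rules R) \<alpha> as \<and> set (last (\<alpha> # as)) \<subseteq> R \<and> (\<forall>u\<in>set as. bbisim_R Rules R u [])"
proof -
  have "(steps Rules)\<^sup>*\<^sup>* \<alpha> []" using normed_reach[OF N] .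
  then show ?thesis using h
  proof (induction rule: converse_rtranclp_induct)
    case base then show ?case by (intro exI[where x="[]"]) auto
  next
    case (step y z)
    show ?case
    proof (cases "set y \<subseteq> R")
      case True then show ?thesis by (intro exI[where x="[]"]) auto
    next
      case False
      then obtain a where m: "bpa_step_R Rules R y a z" using step(1) by (auto simp: stepR_iff)
      from bbR_match[OF step(4) m] show ?thesis
      proof (elim disjE conjE exE)
        assume "a = Tau" "bbisim_R Rules R z []"
        then obtain as where "tau_path (bpa_step_R Rules R) z as \<and> set (last (z # as)) \<subseteq> R \<and> (\<forall>u\<in>set as. bbisim_R Rules R u [])"
          using step(3) by auto
        then show ?thesis using m \<open>a = Tau\<close> \<open>bbisim_R Rules R z []\<close>
          by (intro exI[where x="z # as"]) auto
      next
        fix ts t' assume "tau_path (bpa_step_R Rules R) [] ts" "bpa_step_R Rules R (last ([] # ts)) a t'"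
        then show ?thesis using tau_pathR_Nil by (fastforce simp: stepR_iff)
      qed
    qed
  qed
qed

lemma tau_path_app: "tau_path tr t (xs @ ys) \<longleftrightarrow> tau_path tr t xs \<and> tau_path tr (last (t # xs)) ys"
  by (induction xs arbitrary: t) auto

lemma lemmaD:
  assumes N: "normed Rules" and h: "bbisim_R Rules (Rset Rules \<gamma>) \<alpha> []"
  shows "bbisim Rules (\<alpha> @ \<gamma>) \<gamma>"
proof -
  define R where "R = Rset Rules \<gamma>"
  let ?P = "{(\<alpha> @ \<gamma>, x) | \<alpha> x. bbisim_R Rules R \<alpha> [] \<and> bbisim Rules x \<gamma>}"
  let ?E = "{(x, y). bbisim Rules x y}"
  let ?B = "?P \<union> ?P\<inverse> \<union> ?E"
  have inE: "bbisim Rules p q \<Longrightarrow> (p, q) \<in> ?B" for p q by auto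
  have inP: "bbisim_R Rules R b [] \<Longrightarrow> bbisim Rules q \<gamma> \<Longrightarrow> (b @ \<gamma>, q) \<in> ?B" for b q by blast
  have inPc: "bbisim_R Rules R b [] \<Longrightarrow> bbisim Rules q \<gamma> \<Longrightarrow> (q, b @ \<gamma>) \<in> ?B" for b q by blast
  have Ematch: "(a = Tau \<and> (x', y) \<in> ?B) \<or>
         (\<exists>ts t'. tau_path (bpa_step Rules) y ts \<and> bpa_step Rules (last (y # ts)) a t' \<and> (x', t') \<in> ?B
                 \<and> (\<forall>u \<in> set ts. (x, u) \<in> ?B))" if "bbisim Rules x y" "bpa_step Rules x a x'" for x y a x'
  proof -
    from bb_match'[OF that] show ?thesis
    proof (elim disjE conjE exE)
      assume "a = Tau" "bbisim Rules x' y" then show ?thesis using inE by blast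
    next
      fix ts t' assume h: "tau_path (bpa_step Rules) y ts" "bpa_step Rules (last (y # ts)) a t'"
        "bbisim Rules x' t'" "\<forall>u \<in> set ts. bbisim Rules x u"
      then have "(x', t') \<in> ?B" "\<forall>u \<in> set ts. (x, u) \<in> ?B" by auto
      then show ?thesis using h
        apply - apply (rule disjI2) apply (rule exI[where x=ts]) apply (rule exI[where x=t']) by simp
    qed
  qed
  have "branching_sim (bpa_step Rules) ?B"
    unfolding branching_sim_def
  proof (intro allI impI)
    fix x y a x' assume xy: "(x, y) \<in> ?B" and m: "bpa_step Rules x a x'"
    show "(a = Tau \<and> (x', y) \<in> ?B) \<or>
         (\<exists>ts t'. tau_path (bpa_step Rules) y ts \<and> bpa_step Rules (last (y # ts)) a t' \<and> (x', t') \<in> ?B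
                 \<and> (\<forall>u \<in> set ts. (x, u) \<in> ?B))"
    proof (cases "(x, y) \<in> ?E")
      case True then have "bbisim Rules x y" by simp
      then show ?thesis by (rule Ematch[OF _ m])
    next
      case False
      then have "(x, y) \<in> ?P \<or> (x, y) \<in> ?P\<inverse>" using xy by blast
      then show ?thesis
      proof
        assume "(x, y) \<in> ?P"
        then obtain \<alpha> where e: "x = \<alpha> @ \<gamma>" "bbisim_R Rules R \<alpha> []" "bbisim Rules y \<gamma>" by auto
        show ?thesis
        proof (cases "set \<alpha> \<subseteq> R")
          case True
          then have "bbisim Rules (\<alpha> @ \<gamma>) \<gamma>" using Rstar_bb[of \<alpha> Rules \<gamma>] R_def by simp
          then have "bbisim Rules x y" using e bb_sym' bb_trans' by blast
          then show ?thesis by (rule Ematch[OF _ m])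
        next
          case False
          then have "\<alpha> \<noteq> []" by auto
          obtain \<alpha>' where a': "x' = \<alpha>' @ \<gamma>" "bpa_step Rules \<alpha> a \<alpha>'" using step_append_inv[OF m[unfolded e] \<open>\<alpha> \<noteq> []\<close>] by auto
          have "bpa_step_R Rules R \<alpha> a \<alpha>'" using a' False by (simp add: stepR_iff)
          from bbR_match[OF e(2) this] show ?thesis
          proof (elim disjE conjE exE)
            assume "a = Tau" "bbisim_R Rules R \<alpha>' []"
            then have "(x', y) \<in> ?B" using a'(1) e(3) inP by simp
            then show ?thesis using \<open>a = Tau\<close> by simp
          next
            fix ts t' assume "tau_path (bpa_step_R Rules R) [] ts" "bpa_step_R Rules R (last ([] # ts)) a t'"
            then show ?thesis using tau_pathR_Nil by (fastforce simp: stepR_iff)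
          qed
        qed
      next
        assume "(x, y) \<in> ?P\<inverse>"
        then obtain \<alpha> where e: "y = \<alpha> @ \<gamma>" "bbisim_R Rules R \<alpha> []" "bbisim Rules x \<gamma>" by auto
        show ?thesis
        proof (cases "set \<alpha> \<subseteq> R")
          case True
          then have "bbisim Rules (\<alpha> @ \<gamma>) \<gamma>" using Rstar_bb[of \<alpha> Rules \<gamma>] R_def by simp
          then have "bbisim Rules x y" using e bb_sym' bb_trans' by blast
          then show ?thesis by (rule Ematch[OF _ m])
        next
          case False
          from lemmaN[OF N e(2)] obtain as where as: "tau_path (bpa_step_R Rules R) \<alpha> as"
            "set (last (\<alpha> # as)) \<subseteq> R" "\<forall>u\<in>set as. bbisim_R Rules R u []" by auto
          define \<delta> where "\<delta> = last (\<alpha> # as)"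
          have d\<gamma>: "bbisim Rules (\<delta> @ \<gamma>) \<gamma>" using Rstar_bb[of \<delta> Rules \<gamma>] as(2) R_def \<delta>_def by simp
          then have xd: "bbisim Rules x (\<delta> @ \<gamma>)" using e(3) bb_sym' bb_trans' by blast
          have p1: "tau_path (bpa_step Rules) y (map (\<lambda>b. b @ \<gamma>) as)" using tau_pathR_lift[OF as(1)] e by simp
          have l1: "last (y # map (\<lambda>b. b @ \<gamma>) as) = \<delta> @ \<gamma>" using last_map_append'[of \<alpha> \<gamma> as] e \<delta>_def by simp
          have i1: "\<forall>u\<in>set (map (\<lambda>b. b @ \<gamma>) as). (x, u) \<in> ?B" using as(3) e(3) inPc by auto
          from bb_match'[OF xd m] show ?thesis
          proof (elim disjE conjE exE)
            assume "a = Tau" "bbisim Rules x' (\<delta> @ \<gamma>)"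
            then have "bbisim Rules x' \<gamma>" using d\<gamma> bb_trans' by blast
            then have "(x', y) \<in> ?B" using e inPc by simp
            then show ?thesis using \<open>a = Tau\<close> by simp
          next
            fix ts t' assume h: "tau_path (bpa_step Rules) (\<delta> @ \<gamma>) ts" "bpa_step Rules (last ((\<delta> @ \<gamma>) # ts)) a t'"
              "bbisim Rules x' t'" "\<forall>u \<in> set ts. bbisim Rules x u"
            let ?ts = "map (\<lambda>b. b @ \<gamma>) as @ ts"
            have p: "tau_path (bpa_step Rules) y ?ts" using p1 h(1) l1 by (simp add: tau_path_app)
            have l: "last (y # ?ts) = last ((\<delta> @ \<gamma>) # ts)" using l1
              by (metis append_Cons last_append last_ConsL last_ConsR list.distinct(1))
            have i: "\<forall>u\<in>set ?ts. (x, u) \<in> ?B" using i1 h(4) inE by auto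
            have "bpa_step Rules (last (y # ?ts)) a t'" using l h(2) by simp
            moreover have "(x', t') \<in> ?B" using h(3) inE by simp
            ultimately show ?thesis using p i
              apply - apply (rule disjI2) apply (rule exI[where x="?ts"]) apply (rule exI[where x=t']) by simp
          qed
        qed
      qed
    qed
  qed
  moreover have "(x,y) \<in> ?B \<Longrightarrow> (y,x) \<in> ?B" for x y using bb_sym' by blast
  moreover have "(\<alpha> @ \<gamma>, \<gamma>) \<in> ?B" using h unfolding R_def[symmetric] by (rule inP) (rule bb_refl')
  ultimately show ?thesis by (rule bb_via)
qed

lemma down:
  assumes N: "normed Rules"
  shows "tau_path (bpa_step Rules) (\<beta> @ \<gamma>) ts \<Longrightarrow> (\<forall>u\<in>set ((\<beta> @ \<gamma>) # ts). \<not> bbisim Rules u \<gamma>)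
    \<Longrightarrow> \<exists>bs. ts = map (\<lambda>b. b @ \<gamma>) bs \<and> tau_path (bpa_step_R Rules (Rset Rules \<gamma>)) \<beta> bs"
proof (induction ts arbitrary: \<beta>)
  case Nil then show ?case by auto
next
  case (Cons u us)
  have "\<beta> \<noteq> []" using Cons(3) bb_refl' by fastforce
  have m: "bpa_step Rules (\<beta> @ \<gamma>) Tau u" using Cons(2) by simp
  obtain \<beta>1 where b1: "u = \<beta>1 @ \<gamma>" "bpa_step Rules \<beta> Tau \<beta>1" using step_append_inv[OF m \<open>\<beta> \<noteq> []\<close>] by auto
  have "\<not> set \<beta> \<subseteq> Rset Rules \<gamma>" using Rstar_bb[of \<beta> Rules \<gamma>] Cons(3) by auto
  then have s: "bpa_step_R Rules (Rset Rules \<gamma>) \<beta> Tau \<beta>1" using b1 by (simp add: stepR_iff)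
  have "tau_path (bpa_step Rules) (\<beta>1 @ \<gamma>) us" using Cons(2) b1 by simp
  moreover have "\<forall>u\<in>set ((\<beta>1 @ \<gamma>) # us). \<not> bbisim Rules u \<gamma>" using Cons(3) b1 by auto
  ultimately obtain bs where "us = map (\<lambda>b. b @ \<gamma>) bs" "tau_path (bpa_step_R Rules (Rset Rules \<gamma>)) \<beta>1 bs"
    using Cons(1) by blast
  then show ?case using s b1 by (intro exI[where x="\<beta>1 # bs"]) auto
qed

lemma reduction_A:
  assumes N: "normed Rules" and h: "bbisim Rules (\<alpha> @ \<gamma>) (\<beta> @ \<gamma>)"
  shows "bbisim_R Rules (Rset Rules \<gamma>) \<alpha> \<beta>"
proof -
  define R where "R = Rset Rules \<gamma>"
  let ?B = "{(\<alpha>, \<beta>). bbisim Rules (\<alpha> @ \<gamma>) (\<beta> @ \<gamma>)}"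
  have "branching_sim (bpa_step_R Rules R) ?B"
    unfolding branching_sim_def
  proof (intro allI impI)
    fix \<alpha> \<beta> a \<alpha>' assume ab: "(\<alpha>, \<beta>) \<in> ?B" and m: "bpa_step_R Rules R \<alpha> a \<alpha>'"
    have ab': "bbisim Rules (\<alpha> @ \<gamma>) (\<beta> @ \<gamma>)" using ab by simp
    have nR: "\<not> set \<alpha> \<subseteq> R" "bpa_step Rules \<alpha> a \<alpha>'" using m by (auto simp: stepR_iff)
    have na: "\<not> bbisim Rules (\<alpha> @ \<gamma>) \<gamma>" using bb_Rstar[OF N] nR R_def by blast
    have m': "bpa_step Rules (\<alpha> @ \<gamma>) a (\<alpha>' @ \<gamma>)" using nR(2) by (rule step_append)
    from bb_match'[OF ab' m'] 
    show "(a = Tau \<and> (\<alpha>', \<beta>) \<in> ?B) \<or>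
         (\<exists>ts t'. tau_path (bpa_step_R Rules R) \<beta> ts \<and> bpa_step_R Rules R (last (\<beta> # ts)) a t' \<and> (\<alpha>', t') \<in> ?B
                 \<and> (\<forall>u \<in> set ts. (\<alpha>, u) \<in> ?B))"
    proof (elim disjE conjE exE)
      assume "a = Tau" "bbisim Rules (\<alpha>' @ \<gamma>) (\<beta> @ \<gamma>)" then show ?thesis by simp
    next
      fix ts t' assume p: "tau_path (bpa_step Rules) (\<beta> @ \<gamma>) ts" "bpa_step Rules (last ((\<beta> @ \<gamma>) # ts)) a t'"
        "bbisim Rules (\<alpha>' @ \<gamma>) t'" "\<forall>u \<in> set ts. bbisim Rules (\<alpha> @ \<gamma>) u"
      have all: "\<forall>u\<in>set ((\<beta> @ \<gamma>) # ts). bbisim Rules (\<alpha> @ \<gamma>) u" using p(4) ab' by auto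
      have ng: "\<forall>u\<in>set ((\<beta> @ \<gamma>) # ts). \<not> bbisim Rules u \<gamma>" using all na bb_trans' by blast
      from down[OF N p(1) ng] obtain bs where bs: "ts = map (\<lambda>b. b @ \<gamma>) bs"
        "tau_path (bpa_step_R Rules R) \<beta> bs" unfolding R_def by blast
      define l where "l = last (\<beta> # bs)"
      have ll: "last ((\<beta> @ \<gamma>) # ts) = l @ \<gamma>" using bs(1) last_map_append'[of \<beta> \<gamma> bs] l_def by simp
      have "last ((\<beta> @ \<gamma>) # ts) \<in> set ((\<beta> @ \<gamma>) # ts)" by simp
      then have nl: "\<not> bbisim Rules (l @ \<gamma>) \<gamma>" using ng ll by metis
      then have "l \<noteq> []" using bb_refl' by fastforce
      have "\<not> set l \<subseteq> R" using nl Rstar_bb[of l Rules \<gamma>] R_def by auto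
      obtain \<beta>' where b': "t' = \<beta>' @ \<gamma>" "bpa_step Rules l a \<beta>'" using step_append_inv[of Rules l \<gamma> a t'] p(2) ll \<open>l \<noteq> []\<close> by auto
      have s: "bpa_step_R Rules R (last (\<beta> # bs)) a \<beta>'" using b' \<open>\<not> set l \<subseteq> R\<close> l_def by (simp add: stepR_iff)
      have pa: "(\<alpha>', \<beta>') \<in> ?B" using p(3) b' by simp
      have i: "\<forall>u \<in> set bs. (\<alpha>, u) \<in> ?B" using p(4) bs(1) by auto
      show ?thesis using bs(2) s pa i
        apply - apply (rule disjI2) apply (rule exI[where x=bs]) apply (rule exI[where x=\<beta>']) by simp
    qed
  qed
  moreover have "(x,y) \<in> ?B \<Longrightarrow> (y,x) \<in> ?B" for x y using bb_sym' by blast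
  moreover have "(\<alpha>, \<beta>) \<in> ?B" using h by simp
  ultimately show ?thesis unfolding bbisim_R_def R_def[symmetric] by (rule bb_by_sym)
qed

lemma reduction_B:
  assumes N: "normed Rules" and h: "bbisim_R Rules (Rset Rules \<gamma>) \<alpha> \<beta>"
  shows "bbisim Rules (\<alpha> @ \<gamma>) (\<beta> @ \<gamma>)"
proof -
  define R where "R = Rset Rules \<gamma>"
  let ?Q1 = "{(\<alpha> @ \<gamma>, \<beta> @ \<gamma>) | \<alpha> \<beta>. bbisim_R Rules R \<alpha> \<beta> \<and> \<not> bbisim_R Rules R \<alpha> []}"
  let ?E = "{(x, y). bbisim Rules x y}"
  let ?Q = "?Q1 \<union> ?E"
  have inE: "bbisim Rules p q \<Longrightarrow> (p, q) \<in> ?Q" for p q by auto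
  have inQ1: "bbisim_R Rules R a b \<Longrightarrow> \<not> bbisim_R Rules R a [] \<Longrightarrow> (a @ \<gamma>, b @ \<gamma>) \<in> ?Q" for a b
    by blast
  have good: "bbisim_R Rules R a b \<Longrightarrow> (a @ \<gamma>, b @ \<gamma>) \<in> ?Q" for a b
  proof (cases "bbisim_R Rules R a []")
    case True
    assume ab: "bbisim_R Rules R a b"
    then have "bbisim_R Rules R b []" using True bbR_sym bbR_trans by blast
    then have "bbisim Rules (b @ \<gamma>) \<gamma>" "bbisim Rules (a @ \<gamma>) \<gamma>" using lemmaD[OF N] True R_def by auto
    then have "bbisim Rules (a @ \<gamma>) (b @ \<gamma>)" using bb_sym' bb_trans' by blast
    then show ?thesis by (rule inE)
  next
    case False
    assume "bbisim_R Rules R a b"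
    then show ?thesis using False by (rule inQ1)
  qed
  have Ematch: "(a = Tau \<and> (x', y) \<in> ?Q) \<or>
         (\<exists>ts t'. tau_path (bpa_step Rules) y ts \<and> bpa_step Rules (last (y # ts)) a t' \<and> (x', t') \<in> ?Q
                 \<and> (\<forall>u \<in> set ts. (x, u) \<in> ?Q))" if "bbisim Rules x y" "bpa_step Rules x a x'" for x y a x'
  proof -
    from bb_match'[OF that] show ?thesis
    proof (elim disjE conjE exE)
      assume "a = Tau" "bbisim Rules x' y" then show ?thesis using inE by blast
    next
      fix ts t' assume h: "tau_path (bpa_step Rules) y ts" "bpa_step Rules (last (y # ts)) a t'"
        "bbisim Rules x' t'" "\<forall>u \<in> set ts. bbisim Rules x u"
      then have "(x', t') \<in> ?Q" "\<forall>u \<in> set ts. (x, u) \<in> ?Q" by auto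
      then show ?thesis using h
        apply - apply (rule disjI2) apply (rule exI[where x=ts]) apply (rule exI[where x=t']) by simp
    qed
  qed
  have "branching_sim (bpa_step Rules) ?Q"
    unfolding branching_sim_def
  proof (intro allI impI)
    fix x y a x' assume xy: "(x, y) \<in> ?Q" and m: "bpa_step Rules x a x'"
    show "(a = Tau \<and> (x', y) \<in> ?Q) \<or>
         (\<exists>ts t'. tau_path (bpa_step Rules) y ts \<and> bpa_step Rules (last (y # ts)) a t' \<and> (x', t') \<in> ?Q
                 \<and> (\<forall>u \<in> set ts. (x, u) \<in> ?Q))"
    proof (cases "(x, y) \<in> ?E")
      case True then have "bbisim Rules x y" by simp
      then show ?thesis by (rule Ematch[OF _ m])
    next
      case False
      then have "(x, y) \<in> ?Q1" using xy by simp
      then obtain \<alpha> \<beta> where e: "x = \<alpha> @ \<gamma>" "y = \<beta> @ \<gamma>" "bbisim_R Rules R \<alpha> \<beta>" "\<not> bbisim_R Rules R \<alpha> []"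
        by blast
      have "\<not> set \<alpha> \<subseteq> R" using e(4) bbR_dead[of \<alpha> R "[]" Rules] by auto
      then have "\<alpha> \<noteq> []" by auto
      obtain \<alpha>' where a': "x' = \<alpha>' @ \<gamma>" "bpa_step Rules \<alpha> a \<alpha>'" using step_append_inv[OF m[unfolded e] \<open>\<alpha> \<noteq> []\<close>] by auto
      have sR: "bpa_step_R Rules R \<alpha> a \<alpha>'" using a' \<open>\<not> set \<alpha> \<subseteq> R\<close> by (simp add: stepR_iff)
      from bbR_match[OF e(3) sR] show ?thesis
      proof (elim disjE conjE exE)
        assume "a = Tau" "bbisim_R Rules R \<alpha>' \<beta>"
        then have "(x', y) \<in> ?Q" using good a' e by simp
        then show ?thesis using \<open>a = Tau\<close> by simp
      next
        fix bs \<beta>' assume p: "tau_path (bpa_step_R Rules R) \<beta> bs" "bpa_step_R Rules R (last (\<beta> # bs)) a \<beta>'"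
          "bbisim_R Rules R \<alpha>' \<beta>'" "\<forall>u \<in> set bs. bbisim_R Rules R \<alpha> u"
        have pp: "tau_path (bpa_step Rules) y (map (\<lambda>b. b @ \<gamma>) bs)" using tau_pathR_lift[OF p(1)] e by simp
        have ll: "last (y # map (\<lambda>b. b @ \<gamma>) bs) = last (\<beta> # bs) @ \<gamma>" using last_map_append'[of \<beta> \<gamma> bs] e by simp
        have st: "bpa_step Rules (last (y # map (\<lambda>b. b @ \<gamma>) bs)) a (\<beta>' @ \<gamma>)"
          using ll p(2) by (simp add: stepR_iff step_append)
        have pa: "(x', \<beta>' @ \<gamma>) \<in> ?Q" using good p(3) a' by simp
        have i: "\<forall>u \<in> set (map (\<lambda>b. b @ \<gamma>) bs). (x, u) \<in> ?Q" using p(4) e(1,4) inQ1 by auto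
        show ?thesis using pp st pa i
          apply - apply (rule disjI2) apply (rule exI[where x="map (\<lambda>b. b @ \<gamma>) bs"]) apply (rule exI[where x="\<beta>' @ \<gamma>"]) by simp
      qed
    qed
  qed
  moreover have "(x,y) \<in> ?Q \<Longrightarrow> (y,x) \<in> ?Q" for x y
  proof -
    assume "(x,y) \<in> ?Q"
    then show "(y,x) \<in> ?Q"
    proof
      assume "(x, y) \<in> ?Q1"
      then obtain a b where "x = a @ \<gamma>" "y = b @ \<gamma>" "bbisim_R Rules R a b" by blast
      then show ?thesis using good[OF bbR_sym] by simp
    next
      assume "(x, y) \<in> ?E" then show ?thesis using bb_sym' by blast
    qed
  qed
  moreover have "(\<alpha> @ \<gamma>, \<beta> @ \<gamma>) \<in> ?Q" using h unfolding R_def[symmetric] by (rule good)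
  ultimately show ?thesis by (rule bb_via)
qed

theorem reduction:
  assumes N: "normed Rules"
  shows "bbisim_R Rules (Rset Rules \<gamma>) \<alpha> \<beta> \<longleftrightarrow> bbisim Rules (\<alpha> @ \<gamma>) (\<beta> @ \<gamma>)"
  using reduction_A[OF N] reduction_B[OF N] by blast

section \<open>Lexicographic order\<close>

lemma lex_rev:
  assumes "length x = length y"
  shows "lex_less x y \<longleftrightarrow> rev x < rev y"
proof
  assume "lex_less x y"
  then show "rev x < rev y"
    unfolding lex_less_def
  proof (elim disjE exE conjE)
    fix d assume "d \<noteq> []" "y = d @ x" then show ?thesis using assms by simp
  next
    fix a' b' A B g assume h: "x = a' @ A # g" "y = b' @ B # g" "A < B"
    show ?thesis unfolding list_less_def lexord_def using h
      by (intro CollectI) (simp, metis append_Cons append_Nil append_assoc)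
  qed
next
  assume "rev x < rev y"
  then have "(rev x, rev y) \<in> lexord {(u, v). u < v}" unfolding list_less_def .
  then have "(\<exists>a v. rev y = rev x @ a # v) \<or>
            (\<exists> u a b v w. a < b \<and> rev x = u @ (a # v) \<and> rev y = u @ (b # w))"
    unfolding lexord_def by blast
  then show "lex_less x y"
  proof
    assume "\<exists>a v. rev y = rev x @ a # v"
    then obtain a v where "rev y = rev x @ a # v" by blast
    then have "length y > length x" by (metis length_append length_rev list.size(4) add_Suc_right less_add_Suc1)
    then show ?thesis using assms by simp
  next
    assume "\<exists> u a b v w. a < b \<and> rev x = u @ (a # v) \<and> rev y = u @ (b # w)"
    then obtain u a b v w where h: "a < b" "rev x = u @ (a # v)" "rev y = u @ (b # w)" by auto
    then have "x = rev v @ a # rev u" "y = rev w @ b # rev u" by (metis rev_append rev_rev_ident rev.simps(2) append_assoc append_Cons append_Nil)+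
    then show ?thesis unfolding lex_less_def using h(1) by blast
  qed
qed

lemma lex_app_right: "lex_less x y \<Longrightarrow> lex_less (x @ z) (y @ z)"
  unfolding lex_less_def by (metis append_Cons append_assoc append_is_Nil_conv)

lemma lex_app_left:
  assumes "lex_less x y" "length x = length y" shows "lex_less (w @ x) (v @ y)"
proof -
  from assms have "\<exists>a' b' A B g. x = a' @ A # g \<and> y = b' @ B # g \<and> A < B"
    unfolding lex_less_def by auto
  then obtain a' b' A B g where "x = a' @ A # g" "y = b' @ B # g" "A < B" by blast
  then show ?thesis unfolding lex_less_def
    by (metis append_assoc)
qed

lemma lex_combine:
  assumes "length d = length d1" "length c = length c1"
    "d1 = d \<or> lex_less d d1" "c1 = c \<or> lex_less c c1"
  shows "d1 @ c1 = d @ c \<or> lex_less (d @ c) (d1 @ c1)"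
  using assms lex_app_right lex_app_left by metis

definition IsPick :: "'v::linorder list set \<Rightarrow> 'v list \<Rightarrow> bool" where
  "IsPick S x \<longleftrightarrow> x \<in> S \<and> (\<forall>\<beta> \<in> S. length \<beta> \<le> length x)
        \<and> (\<forall>\<beta> \<in> S. length \<beta> = length x \<longrightarrow> \<beta> = x \<or> lex_less x \<beta>)"

lemma pick_unique: "IsPick S x \<Longrightarrow> IsPick S y \<Longrightarrow> x = y"
proof -
  assume x: "IsPick S x" and y: "IsPick S y"
  then have l: "length x = length y" unfolding IsPick_def by (meson le_antisym)
  from x y l have "y = x \<or> lex_less x y" "x = y \<or> lex_less y x" unfolding IsPick_def by auto
  then show "x = y" using lex_rev[OF l] lex_rev[OF l[symmetric]] by auto
qed

lemma pick_exists:
  fixes S :: "'v::{finite,linorder} list set"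
  assumes ne: "S \<noteq> {}" and bd: "\<forall>\<delta>\<in>S. length \<delta> \<le> n"
  shows "\<exists>x. IsPick S x"
proof -
  have fl: "finite (length ` S)" using bd by (meson finite_atMost finite_subset image_subsetI atMost_iff)
  define L where "L = Max (length ` S)"
  have L1: "\<forall>\<delta>\<in>S. length \<delta> \<le> L" using fl L_def by auto
  have "L \<in> length ` S" using fl ne L_def by auto
  define S' where "S' = {x\<in>S. length x = L}"
  have S'ne: "S' \<noteq> {}" using \<open>L \<in> length ` S\<close> S'_def by auto
  have "S' \<subseteq> {xs. set xs \<subseteq> UNIV \<and> length xs = L}" using S'_def by auto
  then have fS': "finite S'" using finite_lists_length_eq[of "UNIV :: 'v set" L] finite_subset by auto
  define m where "m = Min (rev ` S')"
  have mS: "m \<in> rev ` S'" using fS' S'ne m_def by auto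
  then obtain x where x: "x \<in> S'" "m = rev x" by auto
  have "IsPick S x"
    unfolding IsPick_def
  proof (intro conjI ballI impI)
    show "x \<in> S" using x S'_def by auto
  next
    fix \<beta> assume "\<beta> \<in> S" then show "length \<beta> \<le> length x" using L1 x S'_def by auto
  next
    fix \<beta> assume b: "\<beta> \<in> S" "length \<beta> = length x"
    then have "\<beta> \<in> S'" using x S'_def by auto
    then have "Min (rev ` S') \<le> rev \<beta>" using fS' by (intro Min_le) auto
    then have "rev x \<le> rev \<beta>" using x m_def by simp
    then show "\<beta> = x \<or> lex_less x \<beta>" using lex_rev[of x \<beta>] b(2) by (metis order_le_less rev_rev_ident)
  qed
  then show ?thesis by blast
qed

section \<open>Candidates\<close>

definition Cand :: "('v \<times> 'a act \<times> 'v list) set \<Rightarrow> 'v list \<Rightarrow> 'v list \<Rightarrow> 'v list set" where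
  "Cand Rules \<alpha> \<gamma> = {\<delta>. bbisim Rules (\<delta> @ \<gamma>) (\<alpha> @ \<gamma>) \<and> redundancy_free Rules \<delta> \<gamma>}"

lemma out_cand: "out_candidates Rules \<gamma> A = Cand Rules [A] \<gamma>"
  unfolding out_candidates_def Cand_def by simp

lemma rf_indep:
  assumes N: "normed Rules" and e: "Rset Rules \<gamma> = Rset Rules \<gamma>'"
  shows "redundancy_free Rules \<delta> \<gamma> \<longleftrightarrow> redundancy_free Rules \<delta> \<gamma>'"
proof -
  have "bbisim Rules (X # \<beta> @ \<gamma>) (\<beta> @ \<gamma>) \<longleftrightarrow> bbisim Rules (X # \<beta> @ \<gamma>') (\<beta> @ \<gamma>')" for X \<beta>
    using reduction[OF N, of \<gamma> "X # \<beta>" \<beta>] reduction[OF N, of \<gamma>' "X # \<beta>" \<beta>] e by simp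
  then show ?thesis unfolding redundancy_free_def by simp
qed

lemma Cand_indep:
  assumes N: "normed Rules" and e: "Rset Rules \<gamma> = Rset Rules \<gamma>'"
  shows "Cand Rules \<alpha> \<gamma> = Cand Rules \<alpha> \<gamma>'"
  unfolding Cand_def using rf_indep[OF N e] reduction[OF N, of \<gamma>] reduction[OF N, of \<gamma>'] e by auto

lemma rf_append: "redundancy_free Rules (\<sigma> @ \<tau>) w \<longleftrightarrow> redundancy_free Rules \<sigma> (\<tau> @ w) \<and> redundancy_free Rules \<tau> w"
  by (induction \<sigma>) (auto simp: rf_Cons)

lemma rf_inv: "bbisim Rules w w' \<Longrightarrow> redundancy_free Rules \<sigma> w \<Longrightarrow> redundancy_free Rules \<sigma> w'"
proof (induction \<sigma>)
  case Nil then show ?case by simp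
next
  case (Cons X \<sigma>)
  have a: "bbisim Rules (X # \<sigma> @ w) (X # \<sigma> @ w')" using bb_left_cong[OF Cons(2), of "X # \<sigma>"] by simp
  have b: "bbisim Rules (\<sigma> @ w) (\<sigma> @ w')" using bb_left_cong[OF Cons(2)] by simp
  have "\<not> bbisim Rules (X # \<sigma> @ w') (\<sigma> @ w')"
  proof
    assume "bbisim Rules (X # \<sigma> @ w') (\<sigma> @ w')"
    then have "bbisim Rules (X # \<sigma> @ w) (\<sigma> @ w)" using a b bb_sym' bb_trans' by metis
    then show False using Cons(3) by (simp add: rf_Cons)
  qed
  then show ?case using Cons by (simp add: rf_Cons)
qed

lemma rf_reduce: "\<exists>\<sigma>'. bbisim Rules (\<sigma>' @ w) (\<sigma> @ w) \<and> redundancy_free Rules \<sigma>' w"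
proof (induction "length \<sigma>" arbitrary: \<sigma> rule: less_induct)
  case less
  show ?case
  proof (cases "redundancy_free Rules \<sigma> w")
    case True then show ?thesis using bb_refl' by blast
  next
    case False
    then obtain d X b where h: "\<sigma> = d @ X # b" "bbisim Rules (X # b @ w) (b @ w)"
      unfolding redundancy_free_def by auto
    have "length (d @ b) < length \<sigma>" using h by simp
    from less[OF this] obtain s' where s': "bbisim Rules (s' @ w) ((d @ b) @ w)" "redundancy_free Rules s' w" by auto
    have "bbisim Rules (d @ b @ w) (d @ X # b @ w)" using bb_left_cong[OF bb_sym'[OF h(2)]] by simp
    then have "bbisim Rules (s' @ w) (\<sigma> @ w)" using s'(1) h(1) bb_trans' by fastforce
    then show ?thesis using s'(2) by blast
  qed
qed

lemma Cand_bound: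
  assumes N: "normed Rules" shows "\<exists>n. \<forall>\<delta>\<in>Cand Rules \<alpha> \<gamma>. length \<delta> \<le> n"
proof -
  obtain n where n: "reachn Rules (\<alpha> @ \<gamma>) n" using reachn_exists[OF N] by blast
  have "length \<delta> \<le> n" if "\<delta> \<in> Cand Rules \<alpha> \<gamma>" for \<delta>
  proof -
    have "reachn Rules (\<delta> @ \<gamma>) n" using reachn_inv[OF N n] that bb_sym' unfolding Cand_def by blast
    from rf_bound[OF this] that show ?thesis unfolding Cand_def by auto
  qed
  then show ?thesis by blast
qed

lemma Cand_Nil:
  assumes N: "normed Rules" shows "Cand Rules [] \<gamma> = {[]}"
proof -
  have "\<delta> = []" if "\<delta> \<in> Cand Rules [] \<gamma>" for \<delta>
  proof (cases \<delta>)
    case Nil then show ?thesis .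
  next
    case (Cons X b)
    from that have h: "bbisim Rules (X # b @ \<gamma>) \<gamma>" "redundancy_free Rules (X # b) \<gamma>" using Cons unfolding Cand_def by auto
    have "bbisim Rules (b @ \<gamma>) \<gamma>" using lemmaZ[OF N, of "[X]" b \<gamma>] h(1) by simp
    then have "bbisim Rules (X # b @ \<gamma>) (b @ \<gamma>)" using h(1) bb_sym' bb_trans' by blast
    then show ?thesis using h(2) by (simp add: rf_Cons)
  qed
  moreover have "[] \<in> Cand Rules [] \<gamma>" unfolding Cand_def by (simp add: bb_refl')
  ultimately show ?thesis by blast
qed

lemma canon_out_pick:
  fixes Rules :: "('v::{finite,linorder} \<times> 'a act \<times> 'v list) set"
  assumes N: "normed Rules"
  shows "IsPick (Cand Rules [A] \<gamma>) (canon_out Rules \<gamma> A)"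
proof -
  have ne: "Cand Rules [A] \<gamma> \<noteq> {}"
  proof (cases "bbisim Rules (A # \<gamma>) \<gamma>")
    case True
    then have "[] \<in> Cand Rules [A] \<gamma>" unfolding Cand_def using bb_sym' by auto
    then show ?thesis by auto
  next
    case False
    then have "[A] \<in> Cand Rules [A] \<gamma>" unfolding Cand_def by (simp add: bb_refl' rf_Cons)
    then show ?thesis by auto
  qed
  obtain n where "\<forall>\<delta>\<in>Cand Rules [A] \<gamma>. length \<delta> \<le> n" using Cand_bound[OF N] by blast
  from pick_exists[OF ne this] obtain x where x: "IsPick (Cand Rules [A] \<gamma>) x" by blast
  have "canon_out Rules \<gamma> A = (THE x. IsPick (Cand Rules [A] \<gamma>) x)"
    unfolding canon_out_def IsPick_def out_cand by simp
  also have "\<dots> = x" using x pick_unique by blast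
  finally show ?thesis using x by simp
qed

abbreviation rsteps where "rsteps Rules Q \<equiv> (\<lambda>x y. steps Rules x y \<and> y \<in> Q)\<^sup>*\<^sup>*"

lemma tau_path_restr:
  "tau_path (bpa_step Rules) t ts \<Longrightarrow> \<forall>u\<in>set ts. u \<in> Q \<Longrightarrow> rsteps Rules Q t (last (t # ts))"
proof (induction ts arbitrary: t)
  case Nil then show ?case by simp
next
  case (Cons u us)
  then have "rsteps Rules Q u (last (u # us))" by simp
  moreover have "steps Rules t u \<and> u \<in> Q" using Cons(2,3) by auto
  ultimately show ?case by (metis (mono_tags, lifting) converse_rtranclp_into_rtranclp last_ConsR list.distinct(1))
qed

lemma mirror:
  assumes "rsteps Rules P s s'" "s \<in> P" "bbisim Rules s t"
  shows "\<exists>t'. bbisim Rules s' t' \<and> rsteps Rules {z. \<exists>p\<in>P. bbisim Rules p z} t t'"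
  using assms
proof (induction arbitrary: t rule: converse_rtranclp_induct)
  case base then show ?case by blast
next
  case (step y z)
  then obtain a where m: "bpa_step Rules y a z" and zP: "z \<in> P" by auto
  from bb_match'[OF step(5) m] show ?case
  proof (elim disjE conjE exE)
    assume "a = Tau" "bbisim Rules z t"
    then show ?thesis using step(3)[OF zP] by blast
  next
    fix ts t1 assume h: "tau_path (bpa_step Rules) t ts" "bpa_step Rules (last (t # ts)) a t1"
      "bbisim Rules z t1" "\<forall>u \<in> set ts. bbisim Rules y u"
    have "\<forall>u\<in>set ts. u \<in> {z. \<exists>p\<in>P. bbisim Rules p z}" using h(4) step(4) by blast
    from tau_path_restr[OF h(1) this] have "rsteps Rules {z. \<exists>p\<in>P. bbisim Rules p z} t (last (t # ts))" .
    moreover have "t1 \<in> {z. \<exists>p\<in>P. bbisim Rules p z}" using zP h(3) by blast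
    moreover have "steps Rules (last (t # ts)) t1" using h(2) by blast
    ultimately have "steps Rules (last (t # ts)) t1 \<and> t1 \<in> {z. \<exists>p\<in>P. bbisim Rules p z}" by blast
    with \<open>rsteps Rules {z. \<exists>p\<in>P. bbisim Rules p z} t (last (t # ts))\<close>
    have r1: "rsteps Rules {z. \<exists>p\<in>P. bbisim Rules p z} t t1"
      by (rule rtranclp.rtrancl_into_rtrancl)
    obtain t' where "bbisim Rules s' t'" "rsteps Rules {z. \<exists>p\<in>P. bbisim Rules p z} t1 t'"
      using step(3)[OF zP h(3)] by blast
    then show ?thesis using r1 rtranclp_trans[of _ t t1 t'] by blast
  qed
qed

lemma pathsplit:
  assumes "rsteps Rules Q (\<sigma> @ w) u" "\<sigma> @ w \<in> Q"
  shows "(\<exists>\<sigma>1 Y \<sigma>2 \<mu>. \<sigma> = \<sigma>1 @ Y # \<sigma>2 \<and> \<mu> \<noteq> [] \<and> (steps Rules)\<^sup>*\<^sup>* [Y] \<mu> \<and> u = \<mu> @ \<sigma>2 @ w \<and> Y # \<sigma>2 @ w \<in> Q) \<or> w \<in> Q"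
  using assms(1)
proof (induction rule: rtranclp_induct)
  case base
  then show ?case
  proof (cases \<sigma>)
    case Nil then show ?thesis using assms(2) by simp
  next
    case (Cons Y s2)
    then show ?thesis using assms(2)
      by (intro disjI1 exI[where x="[]"] exI[where x=Y] exI[where x=s2] exI[where x="[Y]"]) auto
  qed
next
  case (step u u')
  from step(3) show ?case
  proof
    assume "w \<in> Q" then show ?thesis by simp
  next
    assume "\<exists>\<sigma>1 Y \<sigma>2 \<mu>. \<sigma> = \<sigma>1 @ Y # \<sigma>2 \<and> \<mu> \<noteq> [] \<and> (steps Rules)\<^sup>*\<^sup>* [Y] \<mu> \<and> u = \<mu> @ \<sigma>2 @ w \<and> Y # \<sigma>2 @ w \<in> Q"
    then obtain s1 Y s2 \<mu> where h: "\<sigma> = s1 @ Y # s2" "\<mu> \<noteq> []" "(steps Rules)\<^sup>*\<^sup>* [Y] \<mu>" "u = \<mu> @ s2 @ w"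
      "Y # s2 @ w \<in> Q" by blast
    obtain Z \<mu>0 where Z: "\<mu> = Z # \<mu>0" using h(2) by (cases \<mu>) auto
    obtain a where m: "bpa_step Rules u a u'" and u'Q: "u' \<in> Q" using step(2) by auto
    then obtain \<rho> where r: "(Z, a, \<rho>) \<in> Rules" "u' = \<rho> @ \<mu>0 @ s2 @ w"
      using h(4) Z unfolding bpa_step_def by auto
    have "bpa_step Rules (Z # \<mu>0) a (\<rho> @ \<mu>0)" unfolding bpa_step_def using r by auto
    then have "steps Rules (Z # \<mu>0) (\<rho> @ \<mu>0)" by blast
    with h(3)[unfolded Z] have st: "(steps Rules)\<^sup>*\<^sup>* [Y] (\<rho> @ \<mu>0)" by (rule rtranclp.rtrancl_into_rtrancl)
    show ?thesis
    proof (cases "\<rho> @ \<mu>0 = []")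
      case False
      then show ?thesis using h(1,5) st r(2)
        by (intro disjI1 exI[where x=s1] exI[where x=Y] exI[where x=s2] exI[where x="\<rho> @ \<mu>0"]) auto
    next
      case True
      then have u': "u' = s2 @ w" using r(2) by simp
      show ?thesis
      proof (cases s2)
        case Nil then show ?thesis using u' u'Q by simp
      next
        case (Cons Y' s2')
        have "(steps Rules)\<^sup>*\<^sup>* [Y'] [Y']" by simp
        then show ?thesis using h(1) u' u'Q Cons
          by (intro disjI1 exI[where x="s1 @ [Y]"] exI[where x=Y'] exI[where x=s2'] exI[where x="[Y']"]) auto
      qed
    qed
  qed
qed

lemma steps_lift_restr:
  "(steps Rules)\<^sup>*\<^sup>* x y \<Longrightarrow> rsteps Rules {\<nu> @ w | \<nu>. (steps Rules)\<^sup>*\<^sup>* x \<nu>} (x @ w) (y @ w)"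
proof (induction rule: rtranclp_induct)
  case base then show ?case by simp
next
  case (step y z)
  then obtain a where "bpa_step Rules y a z" by auto
  then have "steps Rules (y @ w) (z @ w)" using step_append by blast
  moreover have "(steps Rules)\<^sup>*\<^sup>* x z" using step(1,2) by (rule rtranclp.rtrancl_into_rtrancl)
  then have "z @ w \<in> {\<nu> @ w | \<nu>. (steps Rules)\<^sup>*\<^sup>* x \<nu>}" by blast
  ultimately have "steps Rules (y @ w) (z @ w) \<and> z @ w \<in> {\<nu> @ w | \<nu>. (steps Rules)\<^sup>*\<^sup>* x \<nu>}" by blast
  with step(3) show ?case by (rule rtranclp.rtrancl_into_rtrancl)
qed

lemma lemmaM:
  assumes N: "normed Rules" and d: "\<delta> \<in> Cand Rules (\<alpha>' @ [A]) \<gamma>"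
  shows "(\<exists>\<delta>1 \<delta>2. \<delta> = \<delta>1 @ \<delta>2 \<and> bbisim Rules (\<delta>2 @ \<gamma>) (A # \<gamma>)) \<or>
         (\<exists>\<delta>' \<in> Cand Rules (\<alpha>' @ [A]) \<gamma>. length \<delta> < length \<delta>')"
proof -
  have dd: "bbisim Rules (\<delta> @ \<gamma>) (\<alpha>' @ A # \<gamma>)" "redundancy_free Rules \<delta> \<gamma>" using d unfolding Cand_def by auto
  define P where "P = {\<nu> @ (A # \<gamma>) | \<nu>. (steps Rules)\<^sup>*\<^sup>* \<alpha>' \<nu>}"
  have sP: "\<alpha>' @ A # \<gamma> \<in> P" unfolding P_def by blast
  have path: "rsteps Rules P (\<alpha>' @ A # \<gamma>) ([] @ A # \<gamma>)"
    unfolding P_def by (rule steps_lift_restr[OF normed_reach[OF N]])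
  from mirror[OF path[simplified] sP bb_sym'[OF dd(1)]] obtain t' where
    t': "bbisim Rules (A # \<gamma>) t'" "rsteps Rules {z. \<exists>p\<in>P. bbisim Rules p z} (\<delta> @ \<gamma>) t'" by blast
  have dP: "\<delta> @ \<gamma> \<in> {z. \<exists>p\<in>P. bbisim Rules p z}" using sP dd(1) bb_sym' by blast
  from pathsplit[OF t'(2) dP] show ?thesis
  proof
    assume "\<gamma> \<in> {z. \<exists>p\<in>P. bbisim Rules p z}"
    then obtain \<nu> where "bbisim Rules (\<nu> @ [A] @ \<gamma>) \<gamma>" unfolding P_def by auto
    from lemmaZ[OF N this] have "bbisim Rules ([] @ \<gamma>) (A # \<gamma>)" using bb_sym' by simp
    then show ?thesis by blast
  next
    assume "\<exists>\<sigma>1 Y \<sigma>2 \<mu>. \<delta> = \<sigma>1 @ Y # \<sigma>2 \<and> \<mu> \<noteq> [] \<and> (steps Rules)\<^sup>*\<^sup>* [Y] \<mu> \<and> t' = \<mu> @ \<sigma>2 @ \<gamma>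
       \<and> Y # \<sigma>2 @ \<gamma> \<in> {z. \<exists>p\<in>P. bbisim Rules p z}"
    then obtain s1 Y s2 \<mu> \<nu> where h: "\<delta> = s1 @ Y # s2" "\<mu> \<noteq> []" "t' = \<mu> @ s2 @ \<gamma>"
      "bbisim Rules (\<nu> @ A # \<gamma>) (Y # s2 @ \<gamma>)" unfolding P_def by blast
    define v where "v = s2 @ \<gamma>"
    have muv: "bbisim Rules (\<mu> @ v) (A # \<gamma>)" using t'(1) h(3) v_def bb_sym' by simp
    show ?thesis
    proof (cases "bbisim Rules v (A # \<gamma>)")
      case True
      then show ?thesis using h(1) v_def by (intro disjI1 exI[where x="s1 @ [Y]"] exI[where x=s2]) auto
    next
      case c1: False
      show ?thesis
      proof (cases "bbisim Rules (\<nu> @ A # \<gamma>) (A # \<gamma>)")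
        case True
        have "bbisim Rules (Y # s2 @ \<gamma>) (A # \<gamma>)" by (rule bb_trans'[OF bb_sym'[OF h(4)] True])
        then have "bbisim Rules ((Y # s2) @ \<gamma>) (A # \<gamma>)" by simp
        then show ?thesis using h(1) by (intro disjI1 exI[where x=s1] exI[where x="Y # s2"]) auto
      next
        case c2: False
        obtain \<mu>' where m': "bbisim Rules (\<mu>' @ v) (\<mu> @ v)" "redundancy_free Rules \<mu>' v" using rf_reduce by blast
        obtain \<nu>' where n': "bbisim Rules (\<nu>' @ \<mu>' @ v) (\<nu> @ \<mu>' @ v)" "redundancy_free Rules \<nu>' (\<mu>' @ v)"
          using rf_reduce by blast
        have m'A: "bbisim Rules (\<mu>' @ v) (A # \<gamma>)" using m'(1) muv bb_trans' by blast
        have "\<mu>' \<noteq> []" using m'A c1 by auto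
        have nA: "bbisim Rules (\<nu> @ \<mu>' @ v) (\<nu> @ A # \<gamma>)" using bb_left_cong[OF m'A] by simp
        have "\<nu>' \<noteq> []"
        proof
          assume "\<nu>' = []"
          then have "bbisim Rules (\<mu>' @ v) (\<nu> @ \<mu>' @ v)" using n'(1) by simp
          then have "bbisim Rules (\<nu> @ A # \<gamma>) (A # \<gamma>)" by (rule bb_trans'[OF bb_trans'[OF bb_sym'[OF nA] bb_sym'] m'A])
          then show False using c2 by simp
        qed
        define \<delta>' where "\<delta>' = s1 @ \<nu>' @ \<mu>' @ s2"
        have "bbisim Rules (\<nu>' @ \<mu>' @ v) (Y # s2 @ \<gamma>)" by (rule bb_trans'[OF bb_trans'[OF n'(1) nA] h(4)])
        then have core: "bbisim Rules (\<nu>' @ \<mu>' @ v) (Y # v)" by (simp add: v_def)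
        have "bbisim Rules (s1 @ \<nu>' @ \<mu>' @ v) (s1 @ Y # v)" using bb_left_cong[OF core] .
        then have e1: "bbisim Rules (\<delta>' @ \<gamma>) (\<delta> @ \<gamma>)" using \<delta>'_def h(1) v_def by simp
        have "bbisim Rules (\<delta>' @ \<gamma>) (\<alpha>' @ A # \<gamma>)" by (rule bb_trans'[OF e1 dd(1)])
        then have e2: "bbisim Rules (\<delta>' @ \<gamma>) ((\<alpha>' @ [A]) @ \<gamma>)" by simp
        have rfd: "redundancy_free Rules s1 ((Y # s2) @ \<gamma>)" "redundancy_free Rules (Y # s2) \<gamma>"
          using dd(2) h(1) rf_append[of Rules s1 "Y # s2" \<gamma>] by auto
        then have rs2: "redundancy_free Rules s2 \<gamma>" by (simp add: rf_Cons)
        have "redundancy_free Rules s1 (Y # v)" using rfd(1) v_def by simp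
        from rf_inv[OF bb_sym'[OF core] this]
        have "redundancy_free Rules s1 ((\<nu>' @ \<mu>' @ s2) @ \<gamma>)" using v_def by simp
        moreover have "redundancy_free Rules (\<nu>' @ \<mu>' @ s2) \<gamma>"
          using n'(2) m'(2) rs2 v_def rf_append by (simp add: rf_append)
        ultimately have "redundancy_free Rules \<delta>' \<gamma>" using \<delta>'_def rf_append by (simp add: rf_append)
        then have "\<delta>' \<in> Cand Rules (\<alpha>' @ [A]) \<gamma>" using e2 unfolding Cand_def by simp
        moreover have "length \<delta> < length \<delta>'"
        proof -
          have "length \<mu>' > 0" "length \<nu>' > 0" using \<open>\<mu>' \<noteq> []\<close> \<open>\<nu>' \<noteq> []\<close> by auto
          moreover have "length \<delta>' = length s1 + length \<nu>' + length \<mu>' + length s2" "length \<delta> = length s1 + 1 + length s2"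
            using \<delta>'_def h(1) by auto
          ultimately show ?thesis by linarith
        qed
        ultimately show ?thesis by blast
      qed
    qed
  qed
qed

lemma key:
  fixes Rules :: "('v::{finite,linorder} \<times> 'a act \<times> 'v list) set"
  assumes N: "normed Rules" and d: "IsPick (Cand Rules \<alpha>' (A # \<gamma>)) d" and c: "IsPick (Cand Rules [A] \<gamma>) c"
  shows "IsPick (Cand Rules (\<alpha>' @ [A]) \<gamma>) (d @ c)"
proof -
  let ?S = "Cand Rules (\<alpha>' @ [A]) \<gamma>"
  have dC: "bbisim Rules (d @ A # \<gamma>) (\<alpha>' @ A # \<gamma>)" "redundancy_free Rules d (A # \<gamma>)"
    using d unfolding IsPick_def Cand_def by auto
  have cC: "bbisim Rules (c @ \<gamma>) (A # \<gamma>)" "redundancy_free Rules c \<gamma>"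
    using c unfolding IsPick_def Cand_def by auto
  have "bbisim Rules (d @ c @ \<gamma>) (d @ A # \<gamma>)" using bb_left_cong[OF cC(1)] .
  then have "bbisim Rules (d @ c @ \<gamma>) (\<alpha>' @ A # \<gamma>)" using dC(1) by (rule bb_trans')
  then have "bbisim Rules ((d @ c) @ \<gamma>) ((\<alpha>' @ [A]) @ \<gamma>)" by simp
  moreover have "redundancy_free Rules (d @ c) \<gamma>"
    using rf_inv[OF bb_sym'[OF cC(1)] dC(2)] cC(2) by (simp add: rf_append)
  ultimately have dcS: "d @ c \<in> ?S" unfolding Cand_def by simp
  have split_ok: "length \<delta>1 \<le> length d \<and> length \<delta>2 \<le> length c \<and>
      (length \<delta>1 = length d \<longrightarrow> \<delta>1 = d \<or> lex_less d \<delta>1) \<and> (length \<delta>2 = length c \<longrightarrow> \<delta>2 = c \<or> lex_less c \<delta>2)"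
    if "\<delta>1 @ \<delta>2 \<in> ?S" "bbisim Rules (\<delta>2 @ \<gamma>) (A # \<gamma>)" for \<delta>1 \<delta>2
  proof -
    have h: "bbisim Rules (\<delta>1 @ \<delta>2 @ \<gamma>) (\<alpha>' @ A # \<gamma>)" "redundancy_free Rules (\<delta>1 @ \<delta>2) \<gamma>"
      using that(1) unfolding Cand_def by auto
    have "bbisim Rules (\<delta>1 @ A # \<gamma>) (\<delta>1 @ \<delta>2 @ \<gamma>)" using bb_left_cong[OF bb_sym'[OF that(2)]] .
    then have "bbisim Rules (\<delta>1 @ A # \<gamma>) (\<alpha>' @ A # \<gamma>)" using h(1) bb_trans' by blast
    moreover have "redundancy_free Rules \<delta>1 (A # \<gamma>)" using h(2) rf_append rf_inv[OF that(2)] by blast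
    ultimately have "\<delta>1 \<in> Cand Rules \<alpha>' (A # \<gamma>)" unfolding Cand_def by simp
    moreover have "\<delta>2 \<in> Cand Rules [A] \<gamma>" using that(2) h(2) rf_append unfolding Cand_def by auto
    ultimately show ?thesis using d c unfolding IsPick_def by auto
  qed
  obtain n where bd: "\<forall>\<delta>\<in>?S. length \<delta> \<le> n" using Cand_bound[OF N] by blast
  have fl: "finite (length ` ?S)" using bd by (meson finite_atMost finite_subset image_subsetI atMost_iff)
  define L where "L = Max (length ` ?S)"
  have L1: "\<forall>\<delta>\<in>?S. length \<delta> \<le> L" using fl L_def by auto
  have "length ` ?S \<noteq> {}" using dcS by blast
  then have "L \<in> length ` ?S" using Max_in[OF fl] L_def by simp
  then obtain \<delta>m where dm: "\<delta>m \<in> ?S" "length \<delta>m = L" by auto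
  have maxsplit: "\<exists>\<delta>1 \<delta>2. \<delta> = \<delta>1 @ \<delta>2 \<and> bbisim Rules (\<delta>2 @ \<gamma>) (A # \<gamma>)" if "\<delta> \<in> ?S" "length \<delta> = L" for \<delta>
  proof -
    have "\<not> (\<exists>\<delta>' \<in> ?S. length \<delta> < length \<delta>')" using L1 that(2) by (simp add: not_less)
    then show ?thesis using lemmaM[OF N that(1)] by blast
  qed
  have "L \<le> length (d @ c)"
  proof -
    obtain \<delta>1 \<delta>2 where "\<delta>m = \<delta>1 @ \<delta>2" "bbisim Rules (\<delta>2 @ \<gamma>) (A # \<gamma>)" using maxsplit[OF dm] by blast
    then show ?thesis using split_ok[of \<delta>1 \<delta>2] dm by auto
  qed
  then have lenOK: "\<forall>\<beta>\<in>?S. length \<beta> \<le> length (d @ c)" using L1 by auto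
  have lexOK: "\<beta> = d @ c \<or> lex_less (d @ c) \<beta>" if bS: "\<beta> \<in> ?S" and bl: "length \<beta> = length (d @ c)" for \<beta>
  proof -
    have "length \<beta> \<le> L" using L1 bS by blast
    then have lb: "length \<beta> = L" using bl \<open>L \<le> length (d @ c)\<close> by linarith
    obtain \<delta>1 \<delta>2 where s: "\<beta> = \<delta>1 @ \<delta>2" "bbisim Rules (\<delta>2 @ \<gamma>) (A # \<gamma>)" using maxsplit[OF bS lb] by blast
    from split_ok[of \<delta>1 \<delta>2] s bS have o: "length \<delta>1 \<le> length d" "length \<delta>2 \<le> length c"
      "length \<delta>1 = length d \<longrightarrow> \<delta>1 = d \<or> lex_less d \<delta>1" "length \<delta>2 = length c \<longrightarrow> \<delta>2 = c \<or> lex_less c \<delta>2" by auto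
    have "length \<delta>1 = length d" "length \<delta>2 = length c" using o(1,2) bl s(1) by auto
    then show ?thesis using lex_combine[of d \<delta>1 c \<delta>2] o(3,4) s(1) by auto
  qed
  show ?thesis unfolding IsPick_def using dcS lenOK lexOK by blast
qed

lemma run_pick:
  fixes Rules :: "('v::{finite,linorder} \<times> 'a act \<times> 'v list) set"
  assumes N: "normed Rules"
  shows "Rset Rules \<gamma> = R \<Longrightarrow> IsPick (Cand Rules \<alpha> \<gamma>) (run_rev (canon_delta Rules) R (rev \<alpha>))"
proof (induction \<alpha> arbitrary: R \<gamma> rule: rev_induct)
  case Nil
  then show ?case using Cand_Nil[OF N] unfolding IsPick_def by simp
next
  case (snoc A \<alpha>')
  define \<gamma>0 where "\<gamma>0 = (SOME g. Rset Rules g = R)"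
  have g0: "Rset Rules \<gamma>0 = R" using someI[of "\<lambda>g. Rset Rules g = R" \<gamma>] snoc(2) \<gamma>0_def by simp
  have cd: "canon_delta Rules R A = (Rset Rules (A # \<gamma>0), canon_out Rules \<gamma>0 A)"
    unfolding canon_delta_def \<gamma>0_def Let_def by simp
  have run: "run_rev (canon_delta Rules) R (rev (\<alpha>' @ [A])) =
     run_rev (canon_delta Rules) (Rset Rules (A # \<gamma>0)) (rev \<alpha>') @ canon_out Rules \<gamma>0 A"
    using cd by simp
  have "IsPick (Cand Rules \<alpha>' (A # \<gamma>0)) (run_rev (canon_delta Rules) (Rset Rules (A # \<gamma>0)) (rev \<alpha>'))"
    using snoc(1) by simp
  from key[OF N this canon_out_pick[OF N]]
  have "IsPick (Cand Rules (\<alpha>' @ [A]) \<gamma>0) (run_rev (canon_delta Rules) R (rev (\<alpha>' @ [A])))" using run by simp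
  moreover have "Cand Rules (\<alpha>' @ [A]) \<gamma>0 = Cand Rules (\<alpha>' @ [A]) \<gamma>" using Cand_indep[OF N] g0 snoc(2) by simp
  ultimately show ?case by simp
qed

theorem mainTheorem13:
  fixes Rules :: "('v::{finite,linorder} \<times> 'a::finite act \<times> 'v list) set"
  assumes "finite Rules"
    and "normed Rules"
    and "R \<in> canon_states Rules"
  shows "bbisim_R Rules R \<alpha> (canon_T Rules R \<alpha>)
    \<and> (bbisim_R Rules R \<alpha> \<beta> \<longleftrightarrow> canon_T Rules R \<alpha> = canon_T Rules R \<beta>)"
proof -
  note N = assms(2)
  obtain \<gamma> where g: "Rset Rules \<gamma> = R" using assms(3) unfolding canon_states_def by auto
  have T: "canon_T Rules R x = run_rev (canon_delta Rules) R (rev x)" for x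
    unfolding canon_T_def transducer_output_def by simp
  have P: "IsPick (Cand Rules x \<gamma>) (canon_T Rules R x)" for x using run_pick[OF N g] T by simp
  have B: "bbisim Rules (canon_T Rules R x @ \<gamma>) (x @ \<gamma>)" for x using P[of x] unfolding IsPick_def Cand_def by simp
  have red: "bbisim_R Rules R x y \<longleftrightarrow> bbisim Rules (x @ \<gamma>) (y @ \<gamma>)" for x y
    using reduction[OF N, of \<gamma> x y] g by simp
  have 1: "bbisim_R Rules R \<alpha> (canon_T Rules R \<alpha>)" using red B bb_sym' by blast
  have 2: "canon_T Rules R \<alpha> = canon_T Rules R \<beta>" if "bbisim_R Rules R \<alpha> \<beta>"
  proof -
    have ab: "bbisim Rules (\<alpha> @ \<gamma>) (\<beta> @ \<gamma>)" using that red by simp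
    have "Cand Rules \<alpha> \<gamma> = Cand Rules \<beta> \<gamma>"
      unfolding Cand_def using ab bb_sym' bb_trans' by blast
    then have "IsPick (Cand Rules \<beta> \<gamma>) (canon_T Rules R \<alpha>)" using P[of \<alpha>] by simp
    then show ?thesis using P[of \<beta>] by (rule pick_unique)
  qed
  have 3: "bbisim_R Rules R \<alpha> \<beta>" if "canon_T Rules R \<alpha> = canon_T Rules R \<beta>"
  proof -
    have "bbisim Rules (\<alpha> @ \<gamma>) (canon_T Rules R \<beta> @ \<gamma>)" using bb_sym'[OF B[of \<alpha>]] that by simp
    then have "bbisim Rules (\<alpha> @ \<gamma>) (\<beta> @ \<gamma>)" using B[of \<beta>] by (rule bb_trans')
    then show ?thesis using red by simp
  qed
  show ?thesis using 1 2 3 by blast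
qed

end
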